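(* For every $\theta\in V_\Lambda$, $\mathcal P(\theta)^\perp=\overline{\mathcal Q}(\theta)$ and ${}^\perp\overline{\mathcal Q}(\theta)=\mathcal P(\theta)$. In particular, if $\mathcal W(\theta)=\{0\}$ then $\overline{\mathcal Q}(\theta)=\mathcal Q(\theta)$, so $\mathcal Q(\theta)=\mathcal P(\theta)^\perp$ and $\mathcal P(\theta)={}^\perp\mathcal Q(\theta)$.
   Context: Let $\Lambda$ be a finite dimensional algebra over a field with $n$ isoclasses of simple modules, and $\mathrm{mod}\text-\Lambda$ the category of finitely generated right $\Lambda$-modules. Fix a torsion class $\mathcal G\subseteq\mathrm{mod}\text-\Lambda$ (closed under isomorphisms, extensions and quotients). For $B\in\mathcal G$, a subobject of $B$ is a submodule in $\mathcal G$; a subobject $A\subseteq B$ is strict if $A\cap B'\in\mathcal G$ for every subobject $B'$ of $B$; a strict quotient of $B$ is $B/A$ with $A$ a strict subobject. A strict morphism is a homomorphism $f:A\to B$ with $A,B\in\mathcal G$ such that $\ker f\in\mathcal G$ is a strict subobject of $A$ and $\operatorname{im} f$ is a strict subobject of $B$. For $\mathcal X\subseteq\mathcal G$, $\mathcal X^\perp$ is the class of $Y\in\mathcal G$ such that every strict morphism $X\to Y$ with $X\in\mathcal X$ is zero, and ${}^\perp\mathcal X$ is the class of $Y\in\mathcal G$ such that every strict morphism $Y\to X$ with $X\in\mathcal X$ is zero. Let $V_\Lambda=\mathrm{Hom}_{\mathbb Z}(K_0\Lambda,\mathbb R)\cong\mathbb R^n$; $\theta(M)$ denotes $\theta$ applied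 to the dimension vector of $M$. Define: $\mathcal P(\theta)$ = $\{0\}$ together with all nonzero $M\in\mathcal G$ with $\theta(M'')>0$ for every nonzero strict quotient $M''$ of $M$ (including $M$); $\mathcal Q(\theta)$ = $\{0\}$ together with all nonzero $N\in\mathcal G$ with $\theta(N')<0$ for every nonzero strict subobject $N'$ of $N$ (including $N$); $\overline{\mathcal Q}(\theta)$ = all $N\in\mathcal G$ with $\theta(N')\le0$ for every strict subobject $N'$ of $N$. For $M\in\mathcal G$, $D_{\mathcal G}(M)$ is the set of $\theta$ with $\theta(M)=0$ and $\theta(M')\le0$ for all strict subobjects $M'$ of $M$, and $\mathcal W(\theta)$ is the class of $X\in\mathcal G$ with $\theta\in D_{\mathcal G}(X)$. *)

theory Defs
  imports Complex_Main
begin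

text \<open>The algebra Lambda is the type 'l (a ring with 1); it is an algebra over the
field 'k via a central ring homomorphism iota, and finite dimensional over 'k.\<close>

definition fd_algebra :: "('k::field \<Rightarrow> 'l::ring_1) \<Rightarrow> bool" where
  "fd_algebra \<iota> \<longleftrightarrow>
     \<iota> 1 = 1 \<and> (\<forall>a b. \<iota> (a + b) = \<iota> a + \<iota> b) \<and> (\<forall>a b. \<iota> (a * b) = \<iota> a * \<iota> b) \<and>
     (\<forall>a x. \<iota> a * x = x * \<iota> a) \<and>
     (\<exists>S. finite S \<and> (\<forall>x. \<exists>c. x = (\<Sum>s\<in>S. \<iota> (c s) * s)))"

section \<open>Right modules, living inside a fixed universe type 'm\<close>

record ('l, 'm) rmod =
  mcar :: "'m set"
  madd :: "'m \<Rightarrow> 'm \<Rightarrow> 'm"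
  mzero :: 'm
  mact :: "'m \<Rightarrow> 'l \<Rightarrow> 'm"

definition is_rmod :: "('l::ring_1, 'm) rmod \<Rightarrow> bool" where
  "is_rmod M \<longleftrightarrow>
     mzero M \<in> mcar M \<and>
     (\<forall>x\<in>mcar M. \<forall>y\<in>mcar M. madd M x y \<in> mcar M) \<and>
     (\<forall>x\<in>mcar M. \<forall>a. mact M x a \<in> mcar M) \<and>
     (\<forall>x\<in>mcar M. \<forall>y\<in>mcar M. \<forall>z\<in>mcar M. madd M (madd M x y) z = madd M x (madd M y z)) \<and>
     (\<forall>x\<in>mcar M. \<forall>y\<in>mcar M. madd M x y = madd M y x) \<and>
     (\<forall>x\<in>mcar M. madd M (mzero M) x = x) \<and>
     (\<forall>x\<in>mcar M. \<exists>y\<in>mcar M. madd M x y = mzero M) \<and>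
     (\<forall>x\<in>mcar M. \<forall>y\<in>mcar M. \<forall>a. mact M (madd M x y) a = madd M (mact M x a) (mact M y a)) \<and>
     (\<forall>x\<in>mcar M. \<forall>a b. mact M x (a + b) = madd M (mact M x a) (mact M x b)) \<and>
     (\<forall>x\<in>mcar M. \<forall>a b. mact M x (a * b) = mact M (mact M x a) b) \<and>
     (\<forall>x\<in>mcar M. mact M x 1 = x)"

definition is_submod :: "('l::ring_1, 'm) rmod \<Rightarrow> 'm set \<Rightarrow> bool" where
  "is_submod M N \<longleftrightarrow> N \<subseteq> mcar M \<and> mzero M \<in> N \<and>
     (\<forall>x\<in>N. \<forall>y\<in>N. madd M x y \<in> N) \<and> (\<forall>x\<in>N. \<forall>a. mact M x a \<in> N)"

definition subm :: "('l, 'm) rmod \<Rightarrow> 'm set \<Rightarrow> ('l, 'm) rmod" where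
  "subm M N = M\<lparr>mcar := N\<rparr>"

definition rspan :: "('l::ring_1, 'm) rmod \<Rightarrow> 'm set \<Rightarrow> 'm set" where
  "rspan M S = \<Inter> {N. is_submod M N \<and> S \<subseteq> N}"

definition fin_gen :: "('l::ring_1, 'm) rmod \<Rightarrow> bool" where
  "fin_gen M \<longleftrightarrow> (\<exists>S. finite S \<and> S \<subseteq> mcar M \<and> rspan M S = mcar M)"

definition fgmod :: "('l::ring_1, 'm) rmod \<Rightarrow> bool" where
  "fgmod M \<longleftrightarrow> is_rmod M \<and> fin_gen M"

definition is_zero :: "('l, 'm) rmod \<Rightarrow> bool" where
  "is_zero M \<longleftrightarrow> mcar M = {mzero M}"

definition is_hom :: "('l::ring_1, 'm) rmod \<Rightarrow> ('l, 'm) rmod \<Rightarrow> ('m \<Rightarrow> 'm) \<Rightarrow> bool" where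
  "is_hom M N f \<longleftrightarrow> (\<forall>x\<in>mcar M. f x \<in> mcar N) \<and>
     (\<forall>x\<in>mcar M. \<forall>y\<in>mcar M. f (madd M x y) = madd N (f x) (f y)) \<and>
     (\<forall>x\<in>mcar M. \<forall>a. f (mact M x a) = mact N (f x) a)"

definition hker :: "('l, 'm) rmod \<Rightarrow> ('l, 'm) rmod \<Rightarrow> ('m \<Rightarrow> 'm) \<Rightarrow> 'm set" where
  "hker M N f = {x \<in> mcar M. f x = mzero N}"

definition is_iso :: "('l::ring_1, 'm) rmod \<Rightarrow> ('l, 'm) rmod \<Rightarrow> bool" where
  "is_iso M N \<longleftrightarrow> (\<exists>f. is_hom M N f \<and> bij_betw f (mcar M) (mcar N))"

definition is_ses :: "('l::ring_1, 'm) rmod \<Rightarrow> ('l, 'm) rmod \<Rightarrow> ('l, 'm) rmod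
                      \<Rightarrow> ('m \<Rightarrow> 'm) \<Rightarrow> ('m \<Rightarrow> 'm) \<Rightarrow> bool" where
  "is_ses A B C f g \<longleftrightarrow> is_hom A B f \<and> inj_on f (mcar A) \<and> is_hom B C g \<and>
     g ` mcar B = mcar C \<and> f ` mcar A = hker B C g"

definition torsion_class :: "('l::ring_1, 'm) rmod set \<Rightarrow> bool" where
  "torsion_class \<G> \<longleftrightarrow>
     (\<forall>M\<in>\<G>. fgmod M) \<and>
     (\<forall>M. fgmod M \<and> is_zero M \<longrightarrow> M \<in> \<G>) \<and>
     (\<forall>M N. M \<in> \<G> \<and> fgmod N \<and> is_iso M N \<longrightarrow> N \<in> \<G>) \<and>
     (\<forall>A B C f g. A \<in> \<G> \<and> C \<in> \<G> \<and> fgmod B \<and> is_ses A B C f g \<longrightarrow> B \<in> \<G>) \<and>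
     (\<forall>M N g. M \<in> \<G> \<and> fgmod N \<and> is_hom M N g \<and> g ` mcar M = mcar N \<longrightarrow> N \<in> \<G>)"

definition subobj :: "('l::ring_1, 'm) rmod set \<Rightarrow> ('l, 'm) rmod \<Rightarrow> 'm set \<Rightarrow> bool" where
  "subobj \<G> B A \<longleftrightarrow> is_submod B A \<and> subm B A \<in> \<G>"

definition strict_subobj :: "('l::ring_1, 'm) rmod set \<Rightarrow> ('l, 'm) rmod \<Rightarrow> 'm set \<Rightarrow> bool" where
  "strict_subobj \<G> B A \<longleftrightarrow> subobj \<G> B A \<and>
     (\<forall>B'. subobj \<G> B B' \<longrightarrow> subm B (A \<inter> B') \<in> \<G>)"

text \<open>M'' is a strict quotient of B: M'' is (a copy of) B/A with A a strict subobject,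
  i.e. there is a surjective homomorphism B -> M'' whose kernel is a strict subobject.\<close>

definition strict_quot :: "('l::ring_1, 'm) rmod set \<Rightarrow> ('l, 'm) rmod \<Rightarrow> ('l, 'm) rmod \<Rightarrow> bool" where
  "strict_quot \<G> B M'' \<longleftrightarrow> fgmod M'' \<and>
     (\<exists>g. is_hom B M'' g \<and> g ` mcar B = mcar M'' \<and> strict_subobj \<G> B (hker B M'' g))"

definition strict_morph :: "('l::ring_1, 'm) rmod set \<Rightarrow> ('l, 'm) rmod \<Rightarrow> ('l, 'm) rmod
                            \<Rightarrow> ('m \<Rightarrow> 'm) \<Rightarrow> bool" where
  "strict_morph \<G> A B f \<longleftrightarrow> A \<in> \<G> \<and> B \<in> \<G> \<and> is_hom A B f \<and>
     subm A (hker A B f) \<in> \<G> \<and> strict_subobj \<G> A (hker A B f) \<and>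
     strict_subobj \<G> B (f ` mcar A)"

definition rperp :: "('l::ring_1, 'm) rmod set \<Rightarrow> ('l, 'm) rmod set \<Rightarrow> ('l, 'm) rmod set" where
  "rperp \<G> \<X> = {Y \<in> \<G>. \<forall>X\<in>\<X>. \<forall>f. strict_morph \<G> X Y f \<longrightarrow> (\<forall>x\<in>mcar X. f x = mzero Y)}"

definition lperp :: "('l::ring_1, 'm) rmod set \<Rightarrow> ('l, 'm) rmod set \<Rightarrow> ('l, 'm) rmod set" where
  "lperp \<G> \<X> = {Y \<in> \<G>. \<forall>X\<in>\<X>. \<forall>f. strict_morph \<G> Y X f \<longrightarrow> (\<forall>y\<in>mcar Y. f y = mzero X)}"

section \<open>Stability functions: V_Lambda = Hom(K_0 Lambda, R)\<close>

text \<open>K_0 of mod-Lambda is the free abelian group on isoclasses modulo short exact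
  sequences, so a group homomorphism K_0 -> R is exactly a real function on objects
  that is constant on isoclasses and additive on short exact sequences.\<close>

definition VLam :: "(('l::ring_1, 'm) rmod \<Rightarrow> real) set" where
  "VLam = {\<theta>. (\<forall>M N. fgmod M \<and> fgmod N \<and> is_iso M N \<longrightarrow> \<theta> M = \<theta> N) \<and>
      (\<forall>A B C f g. fgmod A \<and> fgmod B \<and> fgmod C \<and> is_ses A B C f g \<longrightarrow> \<theta> B = \<theta> A + \<theta> C)}"

definition Pcl :: "('l::ring_1, 'm) rmod set \<Rightarrow> (('l, 'm) rmod \<Rightarrow> real) \<Rightarrow> ('l, 'm) rmod set" where
  "Pcl \<G> \<theta> = {M \<in> \<G>. is_zero M \<or>
      (\<forall>M''. strict_quot \<G> M M'' \<and> \<not> is_zero M'' \<longrightarrow> \<theta> M'' > 0)}"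

definition Qcl :: "('l::ring_1, 'm) rmod set \<Rightarrow> (('l, 'm) rmod \<Rightarrow> real) \<Rightarrow> ('l, 'm) rmod set" where
  "Qcl \<G> \<theta> = {N \<in> \<G>. is_zero N \<or>
      (\<forall>N'. strict_subobj \<G> N N' \<and> \<not> is_zero (subm N N') \<longrightarrow> \<theta> (subm N N') < 0)}"

definition Qbar :: "('l::ring_1, 'm) rmod set \<Rightarrow> (('l, 'm) rmod \<Rightarrow> real) \<Rightarrow> ('l, 'm) rmod set" where
  "Qbar \<G> \<theta> = {N \<in> \<G>. \<forall>N'. strict_subobj \<G> N N' \<longrightarrow> \<theta> (subm N N') \<le> 0}"

definition DG :: "('l::ring_1, 'm) rmod set \<Rightarrow> ('l, 'm) rmod \<Rightarrow> (('l, 'm) rmod \<Rightarrow> real) set" where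
  "DG \<G> M = {\<theta> \<in> VLam. \<theta> M = 0 \<and> (\<forall>M'. strict_subobj \<G> M M' \<longrightarrow> \<theta> (subm M M') \<le> 0)}"

definition Wcl :: "('l::ring_1, 'm) rmod set \<Rightarrow> (('l, 'm) rmod \<Rightarrow> real) \<Rightarrow> ('l, 'm) rmod set" where
  "Wcl \<G> \<theta> = {X \<in> \<G>. \<theta> \<in> DG \<G> X}"

end

theory Submission
  imports Defs "HOL-Library.Function_Algebras"
begin

lemma rm_zero: "is_rmod M \<Longrightarrow> mzero M \<in> mcar M"
  by (simp add: is_rmod_def)
lemma rm_add: "is_rmod M \<Longrightarrow> x \<in> mcar M \<Longrightarrow> y \<in> mcar M \<Longrightarrow> madd M x y \<in> mcar M"
  by (simp add: is_rmod_def)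
lemma rm_act: "is_rmod M \<Longrightarrow> x \<in> mcar M \<Longrightarrow> mact M x a \<in> mcar M"
  by (simp add: is_rmod_def)
lemma rm_assoc: "is_rmod M \<Longrightarrow> x \<in> mcar M \<Longrightarrow> y \<in> mcar M \<Longrightarrow> z \<in> mcar M \<Longrightarrow>
   madd M (madd M x y) z = madd M x (madd M y z)"
  unfolding is_rmod_def by blast
lemma rm_comm: "is_rmod M \<Longrightarrow> x \<in> mcar M \<Longrightarrow> y \<in> mcar M \<Longrightarrow> madd M x y = madd M y x"
  unfolding is_rmod_def by blast
lemma rm_lcomm: "is_rmod M \<Longrightarrow> x \<in> mcar M \<Longrightarrow> y \<in> mcar M \<Longrightarrow> z \<in> mcar M \<Longrightarrow>
   madd M x (madd M y z) = madd M y (madd M x z)"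
  by (metis rm_assoc rm_comm)
lemma rm_lzero: "is_rmod M \<Longrightarrow> x \<in> mcar M \<Longrightarrow> madd M (mzero M) x = x"
  unfolding is_rmod_def by blast
lemma rm_rzero: "is_rmod M \<Longrightarrow> x \<in> mcar M \<Longrightarrow> madd M x (mzero M) = x"
  by (metis rm_comm rm_lzero rm_zero)
lemma rm_inv: "is_rmod M \<Longrightarrow> x \<in> mcar M \<Longrightarrow> \<exists>y\<in>mcar M. madd M x y = mzero M"
  unfolding is_rmod_def by blast
lemma rm_dist1: "is_rmod M \<Longrightarrow> x \<in> mcar M \<Longrightarrow> y \<in> mcar M \<Longrightarrow>
   mact M (madd M x y) a = madd M (mact M x a) (mact M y a)"
  by (simp add: is_rmod_def)
lemma rm_dist2: "is_rmod M \<Longrightarrow> x \<in> mcar M \<Longrightarrow> mact M x (a + b) = madd M (mact M x a) (mact M x b)"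
  by (simp add: is_rmod_def)
lemma rm_mult: "is_rmod M \<Longrightarrow> x \<in> mcar M \<Longrightarrow> mact M x (a * b) = mact M (mact M x a) b"
  by (simp add: is_rmod_def)
lemma rm_one: "is_rmod M \<Longrightarrow> x \<in> mcar M \<Longrightarrow> mact M x 1 = x"
  by (simp add: is_rmod_def)

lemmas rm_ac = rm_assoc rm_comm rm_lcomm

lemma rm_cancel:
  assumes M: "is_rmod M" and x: "x \<in> mcar M" and y: "y \<in> mcar M" and z: "z \<in> mcar M"
    and e: "madd M x y = madd M x z"
  shows "y = z"
proof -
  obtain x' where x': "x' \<in> mcar M" "madd M x x' = mzero M" using rm_inv[OF M x] by blast
  have "y = madd M (madd M x' x) y" using x' M x y by (simp add: rm_comm rm_lzero)
  also have "\<dots> = madd M x' (madd M x y)" using M x y x' by (simp add: rm_assoc)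
  also have "\<dots> = madd M x' (madd M x z)" using e by simp
  also have "\<dots> = madd M (madd M x' x) z" using M x z x' by (simp add: rm_assoc)
  also have "\<dots> = z" using x' M x z by (simp add: rm_comm rm_lzero)
  finally show ?thesis .
qed

lemma rm_idem_zero:
  assumes M: "is_rmod M" and x: "x \<in> mcar M" and e: "madd M x x = x"
  shows "x = mzero M"
  using rm_cancel[OF M x x rm_zero[OF M]] e rm_rzero[OF M x] by simp

lemma rm_act0: assumes M: "is_rmod M" and x: "x \<in> mcar M" shows "mact M x 0 = mzero M"
  using rm_idem_zero[OF M rm_act[OF M x]] rm_dist2[OF M x, of 0 0] by simp

lemma rm_zero_act: assumes M: "is_rmod M" shows "mact M (mzero M) a = mzero M"
  using rm_idem_zero[OF M rm_act[OF M rm_zero[OF M]]] rm_dist1[OF M rm_zero[OF M] rm_zero[OF M], of a]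
    rm_lzero[OF M rm_zero[OF M]] by simp

lemma rm_neg: assumes M: "is_rmod M" and x: "x \<in> mcar M" shows "madd M x (mact M x (-1)) = mzero M"
proof -
  have "madd M x (mact M x (-1)) = madd M (mact M x 1) (mact M x (-1))" using M x by (simp add: rm_one)
  also have "\<dots> = mact M x (1 + -1)" by (rule rm_dist2[OF M x, symmetric])
  finally show ?thesis using rm_act0[OF M x] by simp
qed

lemma hom_zero:
  assumes M: "is_rmod M" and N: "is_rmod N" and f: "is_hom M N f"
  shows "f (mzero M) = mzero N"
proof -
  have z: "f (mzero M) \<in> mcar N" using f rm_zero[OF M] by (simp add: is_hom_def)
  have "f (madd M (mzero M) (mzero M)) = madd N (f (mzero M)) (f (mzero M))"
    using f rm_zero[OF M] by (simp add: is_hom_def)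
  then show ?thesis using rm_idem_zero[OF N z] rm_lzero[OF M rm_zero[OF M]] by simp
qed

section \<open>Submodules\<close>

lemma subm_simps[simp]:
  "mcar (subm M N) = N" "madd (subm M N) = madd M" "mzero (subm M N) = mzero M" "mact (subm M N) = mact M"
  "subm (subm M N) K = subm M K" "subm M (mcar M) = M"
  by (simp_all add: subm_def)

lemma submod_rmod:
  assumes M: "is_rmod M" and N: "is_submod M N"
  shows "is_rmod (subm M N)"
proof -
  have sub: "N \<subseteq> mcar M" using N by (simp add: is_submod_def)
  have inv: "\<forall>x\<in>N. \<exists>y\<in>N. madd M x y = mzero M"
  proof
    fix x assume x: "x \<in> N"
    then have "mact M x (-1) \<in> N" using N by (simp add: is_submod_def)
    then show "\<exists>y\<in>N. madd M x y = mzero M" using rm_neg[OF M] x sub by blast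
  qed
  have cl: "mzero M \<in> N" "\<forall>x\<in>N. \<forall>y\<in>N. madd M x y \<in> N" "\<forall>x\<in>N. \<forall>a. mact M x a \<in> N"
    using N by (simp_all add: is_submod_def)
  show ?thesis unfolding is_rmod_def subm_simps
    apply (intro conjI)
    using cl inv apply blast+
    using sub apply (meson rm_assoc[OF M] subsetD)
    using sub apply (meson rm_comm[OF M] subsetD)
    using sub apply (meson rm_lzero[OF M] subsetD)
    using inv apply blast
    using sub apply (meson rm_dist1[OF M] subsetD)
    using sub apply (meson rm_dist2[OF M] subsetD)
    using sub apply (meson rm_mult[OF M] subsetD)
    using sub apply (meson rm_one[OF M] subsetD)
    done
qed

lemma rmod_submod_car: "is_rmod M \<Longrightarrow> is_submod M (mcar M)"
  by (simp add: is_rmod_def is_submod_def)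

lemma submod_zero: "is_rmod M \<Longrightarrow> is_submod M {mzero M}"
  by (simp add: is_submod_def rm_zero rm_lzero rm_zero_act)

lemma submod_sub_iff:
  "is_submod (subm M N) K \<longleftrightarrow> K \<subseteq> N \<and> mzero M \<in> K \<and> (\<forall>x\<in>K. \<forall>y\<in>K. madd M x y \<in> K) \<and> (\<forall>x\<in>K. \<forall>a. mact M x a \<in> K)"
  by (simp add: is_submod_def)

lemma submod_trans: "is_submod M N \<Longrightarrow> is_submod (subm M N) K \<Longrightarrow> is_submod M K"
  by (auto simp add: is_submod_def)

lemma submod_subm: "is_submod M K \<Longrightarrow> K \<subseteq> N \<Longrightarrow> is_submod (subm M N) K"
  by (auto simp add: is_submod_def)

lemma submod_inter: "is_submod M A \<Longrightarrow> is_submod M B \<Longrightarrow> is_submod M (A \<inter> B)"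
  by (auto simp add: is_submod_def)

lemma rspan_submod: "is_rmod M \<Longrightarrow> S \<subseteq> mcar M \<Longrightarrow> is_submod M (rspan M S)"
  unfolding rspan_def is_submod_def using rmod_submod_car[of M]
  by (auto simp: is_submod_def)

lemma rspan_least: "is_submod M N \<Longrightarrow> S \<subseteq> N \<Longrightarrow> rspan M S \<subseteq> N"
  unfolding rspan_def by auto

lemma rspan_sup: "S \<subseteq> rspan M S"
  unfolding rspan_def by auto

lemma rspan_mono: "S \<subseteq> T \<Longrightarrow> rspan M S \<subseteq> rspan M T"
  unfolding rspan_def by auto



lemma hom_add: "is_hom M N f \<Longrightarrow> x \<in> mcar M \<Longrightarrow> y \<in> mcar M \<Longrightarrow> f (madd M x y) = madd N (f x) (f y)"
  by (simp add: is_hom_def)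
lemma hom_act: "is_hom M N f \<Longrightarrow> x \<in> mcar M \<Longrightarrow> f (mact M x a) = mact N (f x) a"
  by (simp add: is_hom_def)
lemma hom_car: "is_hom M N f \<Longrightarrow> x \<in> mcar M \<Longrightarrow> f x \<in> mcar N"
  by (simp add: is_hom_def)

lemma rmod_transfer:
  assumes X: "is_rmod X" and h: "is_hom X Q p" and s: "p ` mcar X = mcar Q"
    and z: "mzero Q = p (mzero X)"
  shows "is_rmod Q"
proof -
  have ex: "\<And>q. q \<in> mcar Q \<Longrightarrow> \<exists>x\<in>mcar X. q = p x" using s by auto
  note ha = hom_add[OF h] and hc = hom_act[OF h] and hcar = hom_car[OF h]
  have a1: "mzero Q \<in> mcar Q" using z hcar rm_zero[OF X] by simp
  have a2: "\<forall>x\<in>mcar Q. \<forall>y\<in>mcar Q. madd Q x y \<in> mcar Q"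
    using ex ha hcar rm_add[OF X] by metis
  have a3: "\<forall>x\<in>mcar Q. \<forall>a. mact Q x a \<in> mcar Q"
    using ex hc hcar rm_act[OF X] by metis
  have a4: "\<forall>x\<in>mcar Q. \<forall>y\<in>mcar Q. \<forall>w\<in>mcar Q. madd Q (madd Q x y) w = madd Q x (madd Q y w)"
  proof (intro ballI)
    fix q1 q2 q3 assume "q1 \<in> mcar Q" "q2 \<in> mcar Q" "q3 \<in> mcar Q"
    then obtain x1 x2 x3 where x: "x1 \<in> mcar X" "x2 \<in> mcar X" "x3 \<in> mcar X" "q1 = p x1" "q2 = p x2" "q3 = p x3"
      using ex by metis
    then show "madd Q (madd Q q1 q2) q3 = madd Q q1 (madd Q q2 q3)"
      using ha rm_add[OF X] rm_assoc[OF X] by metis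
  qed
  have a5: "\<forall>x\<in>mcar Q. \<forall>y\<in>mcar Q. madd Q x y = madd Q y x"
  proof (intro ballI)
    fix q1 q2 assume "q1 \<in> mcar Q" "q2 \<in> mcar Q"
    then obtain x1 x2 where x: "x1 \<in> mcar X" "x2 \<in> mcar X" "q1 = p x1" "q2 = p x2"
      using ex by metis
    then show "madd Q q1 q2 = madd Q q2 q1"
      using ha rm_comm[OF X] by metis
  qed
  have a6: "\<forall>x\<in>mcar Q. madd Q (mzero Q) x = x"
  proof (intro ballI)
    fix q1 assume "q1 \<in> mcar Q"
    then obtain x1 where x: "x1 \<in> mcar X" "q1 = p x1" using ex by metis
    then show "madd Q (mzero Q) q1 = q1"
      using ha z rm_lzero[OF X] rm_zero[OF X] by metis
  qed
  have a7: "\<forall>x\<in>mcar Q. \<exists>y\<in>mcar Q. madd Q x y = mzero Q"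
  proof (intro ballI)
    fix q1 assume "q1 \<in> mcar Q"
    then obtain x1 where x: "x1 \<in> mcar X" "q1 = p x1" using ex by metis
    then obtain y where y: "y \<in> mcar X" "madd X x1 y = mzero X" using rm_inv[OF X] by metis
    then show "\<exists>y\<in>mcar Q. madd Q q1 y = mzero Q"
      using x ha z hcar by metis
  qed
  have a8: "\<forall>x\<in>mcar Q. \<forall>y\<in>mcar Q. \<forall>a. mact Q (madd Q x y) a = madd Q (mact Q x a) (mact Q y a)"
  proof (intro ballI allI)
    fix q1 q2 a assume "q1 \<in> mcar Q" "q2 \<in> mcar Q"
    then obtain x1 x2 where x: "x1 \<in> mcar X" "x2 \<in> mcar X" "q1 = p x1" "q2 = p x2"
      using ex by metis
    then show "mact Q (madd Q q1 q2) a = madd Q (mact Q q1 a) (mact Q q2 a)"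
      using ha hc rm_add[OF X] rm_act[OF X] rm_dist1[OF X] by metis
  qed
  have a9: "\<forall>x\<in>mcar Q. \<forall>a b. mact Q x (a + b) = madd Q (mact Q x a) (mact Q x b)"
  proof (intro ballI allI)
    fix q1 a b assume "q1 \<in> mcar Q"
    then obtain x1 where x: "x1 \<in> mcar X" "q1 = p x1" using ex by metis
    then show "mact Q q1 (a + b) = madd Q (mact Q q1 a) (mact Q q1 b)"
      using ha hc rm_act[OF X] rm_dist2[OF X] by metis
  qed
  have a10: "\<forall>x\<in>mcar Q. \<forall>a b. mact Q x (a * b) = mact Q (mact Q x a) b"
  proof (intro ballI allI)
    fix q1 a b assume "q1 \<in> mcar Q"
    then obtain x1 where x: "x1 \<in> mcar X" "q1 = p x1" using ex by metis
    then show "mact Q q1 (a * b) = mact Q (mact Q q1 a) b"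
      using hc rm_act[OF X] rm_mult[OF X] by metis
  qed
  have a11: "\<forall>x\<in>mcar Q. mact Q x 1 = x"
  proof (intro ballI allI)
    fix q1 assume "q1 \<in> mcar Q"
    then obtain x1 where x: "x1 \<in> mcar X" "q1 = p x1" using ex by metis
    then show "mact Q q1 1 = q1"
      using hc rm_one[OF X] by metis
  qed
  show ?thesis unfolding is_rmod_def using a1 a2 a3 a4 a5 a6 a7 a8 a9 a10 a11 by blast
qed

section \<open>Quotient construction\<close>

definition qdiff :: "('l::ring_1, 'm) rmod \<Rightarrow> 'm \<Rightarrow> 'm \<Rightarrow> 'm" where
  "qdiff X x y = madd X x (mact X y (-1))"

definition qrel :: "('l::ring_1, 'm) rmod \<Rightarrow> 'm set \<Rightarrow> 'm \<Rightarrow> 'm \<Rightarrow> bool" where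
  "qrel X A x y \<longleftrightarrow> x \<in> mcar X \<and> y \<in> mcar X \<and> qdiff X x y \<in> A"

definition qrep :: "('l::ring_1, 'm) rmod \<Rightarrow> 'm set \<Rightarrow> 'm \<Rightarrow> 'm" where
  "qrep X A x = (SOME y. qrel X A x y)"

definition quotm :: "('l::ring_1, 'm) rmod \<Rightarrow> 'm set \<Rightarrow> ('l, 'm) rmod" where
  "quotm X A = \<lparr>mcar = qrep X A ` mcar X, madd = (\<lambda>a b. qrep X A (madd X a b)),
     mzero = qrep X A (mzero X), mact = (\<lambda>a r. qrep X A (mact X a r))\<rparr>"

context
  fixes X :: "('l::ring_1, 'm) rmod" and A :: "'m set"
  assumes X: "is_rmod X" and A: "is_submod X A"
begin

private lemma Asub: "A \<subseteq> mcar X" using A by (simp add: is_submod_def)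
private lemma A0: "mzero X \<in> A" using A by (simp add: is_submod_def)
private lemma Aadd: "x \<in> A \<Longrightarrow> y \<in> A \<Longrightarrow> madd X x y \<in> A" using A by (simp add: is_submod_def)
private lemma Aact: "x \<in> A \<Longrightarrow> mact X x a \<in> A" using A by (simp add: is_submod_def)

private lemma ng: "x \<in> mcar X \<Longrightarrow> mact X x (-1) \<in> mcar X" using rm_act[OF X] by blast

lemma qdiff_neg: "x \<in> mcar X \<Longrightarrow> y \<in> mcar X \<Longrightarrow> mact X (qdiff X x y) (-1) = qdiff X y x"
  unfolding qdiff_def
  by (simp add: rm_dist1[OF X] ng rm_mult[OF X, symmetric] rm_one[OF X] rm_comm[OF X] rm_act[OF X])

lemma qrel_refl: "x \<in> mcar X \<Longrightarrow> qrel X A x x"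
  unfolding qrel_def qdiff_def using rm_neg[OF X] A0 by simp

lemma qrel_sym: "qrel X A x y \<Longrightarrow> qrel X A y x"
  unfolding qrel_def using qdiff_neg Aact by metis

lemma qdiff_trans: "x \<in> mcar X \<Longrightarrow> y \<in> mcar X \<Longrightarrow> z \<in> mcar X \<Longrightarrow>
   madd X (qdiff X x y) (qdiff X y z) = qdiff X x z"
proof -
  assume x: "x \<in> mcar X" and y: "y \<in> mcar X" and z: "z \<in> mcar X"
  have "madd X (qdiff X x y) (qdiff X y z) = madd X x (madd X (madd X (mact X y (-1)) y) (mact X z (-1)))"
    unfolding qdiff_def using x y z ng by (simp add: rm_assoc[OF X] rm_add[OF X])
  also have "\<dots> = qdiff X x z" unfolding qdiff_def
    using rm_neg[OF X y] rm_comm[OF X y ng[OF y]] rm_lzero[OF X ng[OF z]] by simp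
  finally show ?thesis .
qed

lemma qrel_trans: "qrel X A x y \<Longrightarrow> qrel X A y z \<Longrightarrow> qrel X A x z"
  unfolding qrel_def using qdiff_trans Aadd by metis

lemma qrep_rel: "x \<in> mcar X \<Longrightarrow> qrel X A x (qrep X A x)"
  unfolding qrep_def by (rule someI[of _ x], rule qrel_refl)

lemma qrep_car: "x \<in> mcar X \<Longrightarrow> qrep X A x \<in> mcar X"
  using qrep_rel qrel_def by metis

lemma qrep_eq: "x \<in> mcar X \<Longrightarrow> y \<in> mcar X \<Longrightarrow> qrep X A x = qrep X A y \<longleftrightarrow> qrel X A x y"
proof
  assume x: "x \<in> mcar X" and y: "y \<in> mcar X"
  { assume "qrep X A x = qrep X A y"
    then show "qrel X A x y" using qrep_rel[OF x] qrep_rel[OF y] qrel_sym qrel_trans by metis }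
  { assume r: "qrel X A x y"
    have "(\<lambda>z. qrel X A x z) = (\<lambda>z. qrel X A y z)"
      using r qrel_sym qrel_trans by blast
    then show "qrep X A x = qrep X A y" unfolding qrep_def by simp }
qed

lemma qrel_add: "qrel X A x x' \<Longrightarrow> qrel X A y y' \<Longrightarrow> qrel X A (madd X x y) (madd X x' y')"
proof -
  assume r1: "qrel X A x x'" and r2: "qrel X A y y'"
  then have c: "x \<in> mcar X" "x' \<in> mcar X" "y \<in> mcar X" "y' \<in> mcar X" by (simp_all add: qrel_def)
  have "qdiff X (madd X x y) (madd X x' y') = madd X (qdiff X x x') (qdiff X y y')"
    unfolding qdiff_def using c ng
    by (simp add: rm_dist1[OF X] rm_assoc[OF X] rm_lcomm[OF X] rm_add[OF X] rm_act[OF X])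
  then show ?thesis using r1 r2 Aadd c rm_add[OF X] unfolding qrel_def by simp
qed

lemma qrel_act: "qrel X A x x' \<Longrightarrow> qrel X A (mact X x a) (mact X x' a)"
proof -
  assume r1: "qrel X A x x'"
  then have c: "x \<in> mcar X" "x' \<in> mcar X" by (simp_all add: qrel_def)
  have "qdiff X (mact X x a) (mact X x' a) = mact X (qdiff X x x') a"
    unfolding qdiff_def using c ng
    by (simp add: rm_dist1[OF X] rm_mult[OF X, symmetric])
  then show ?thesis using r1 Aact c rm_act[OF X] unfolding qrel_def by simp
qed

lemma quot_hom: "is_hom X (quotm X A) (qrep X A)"
  unfolding is_hom_def quotm_def
proof (simp, intro conjI ballI allI)
  fix x y assume x: "x \<in> mcar X" and y: "y \<in> mcar X"
  show "qrep X A (madd X x y) = qrep X A (madd X (qrep X A x) (qrep X A y))"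
    using qrep_eq rm_add[OF X] x y qrep_car qrel_add qrep_rel by metis
next
  fix x a assume x: "x \<in> mcar X"
  show "qrep X A (mact X x a) = qrep X A (mact X (qrep X A x) a)"
    using qrep_eq rm_act[OF X] x qrep_car qrel_act qrep_rel by metis
qed

lemma quot_surj: "qrep X A ` mcar X = mcar (quotm X A)"
  by (simp add: quotm_def)

lemma quot_rmod: "is_rmod (quotm X A)"
  by (rule rmod_transfer[OF X quot_hom quot_surj]) (simp add: quotm_def)

lemma quot_ker: "hker X (quotm X A) (qrep X A) = A"
proof -
  have "\<And>x. x \<in> mcar X \<Longrightarrow> qrep X A x = qrep X A (mzero X) \<longleftrightarrow> x \<in> A"
    using qrep_eq rm_zero[OF X] unfolding qrel_def qdiff_def
    by (simp add: rm_zero_act[OF X] rm_rzero[OF X])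
  then show ?thesis unfolding hker_def using Asub by (auto simp: quotm_def)
qed

end



lemma fd_add: "fd_algebra \<iota> \<Longrightarrow> \<iota> (a + b) = \<iota> a + \<iota> b" unfolding fd_algebra_def by blast
lemma fd_mult: "fd_algebra \<iota> \<Longrightarrow> \<iota> (a * b) = \<iota> a * \<iota> b" unfolding fd_algebra_def by blast
lemma fd_central: "fd_algebra \<iota> \<Longrightarrow> \<iota> a * x = x * \<iota> a" unfolding fd_algebra_def by blast
lemma fd_span: "fd_algebra \<iota> \<Longrightarrow> \<exists>S. finite S \<and> (\<forall>x. \<exists>c. x = (\<Sum>s\<in>S. \<iota> (c s) * s))"
  unfolding fd_algebra_def by blast
lemma fd_zero: "fd_algebra \<iota> \<Longrightarrow> \<iota> 0 = 0"
  using fd_add[of \<iota> 0 0] by simp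

section \<open>Linear combinations\<close>

primrec lcl :: "('l::ring_1, 'm) rmod \<Rightarrow> ('k \<Rightarrow> 'l) \<Rightarrow> 'm list \<Rightarrow> ('m \<Rightarrow> 'k) \<Rightarrow> 'm" where
  "lcl M \<iota> [] f = mzero M"
| "lcl M \<iota> (u # us) f = madd M (mact M u (\<iota> (f u))) (lcl M \<iota> us f)"

lemma rm_swap4:
  assumes M: "is_rmod M" and c: "a \<in> mcar M" "b \<in> mcar M" "c \<in> mcar M" "d \<in> mcar M"
  shows "madd M (madd M a b) (madd M c d) = madd M (madd M a c) (madd M b d)"
proof -
  have "madd M (madd M a b) (madd M c d) = madd M a (madd M b (madd M c d))" using c by (simp add: rm_assoc[OF M] rm_add[OF M])
  also have "\<dots> = madd M a (madd M c (madd M b d))" using c rm_lcomm[OF M] by metis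
  also have "\<dots> = madd M (madd M a c) (madd M b d)" using c by (simp add: rm_assoc[OF M] rm_add[OF M])
  finally show ?thesis .
qed

context
  fixes M :: "('l::ring_1, 'm) rmod" and \<iota> :: "'k::field \<Rightarrow> 'l"
  assumes M: "is_rmod M" and fd: "fd_algebra \<iota>"
begin

lemma lcl_car: "set xs \<subseteq> mcar M \<Longrightarrow> lcl M \<iota> xs f \<in> mcar M"
  by (induction xs) (auto simp: rm_zero[OF M] rm_add[OF M] rm_act[OF M])

lemma lcl_add: "set xs \<subseteq> mcar M \<Longrightarrow> lcl M \<iota> xs (\<lambda>x. f x + g x) = madd M (lcl M \<iota> xs f) (lcl M \<iota> xs g)"
proof (induction xs)
  case Nil
  then show ?case by (simp add: rm_lzero[OF M] rm_zero[OF M])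
next
  case (Cons u us)
  then have u: "u \<in> mcar M" and us: "set us \<subseteq> mcar M" by auto
  have "lcl M \<iota> (u # us) (\<lambda>x. f x + g x) =
    madd M (madd M (mact M u (\<iota> (f u))) (mact M u (\<iota> (g u)))) (madd M (lcl M \<iota> us f) (lcl M \<iota> us g))"
    using Cons.IH[OF us] by (simp add: fd_add[OF fd] rm_dist2[OF M u])
  also have "\<dots> = madd M (lcl M \<iota> (u # us) f) (lcl M \<iota> (u # us) g)"
    using rm_swap4[OF M rm_act[OF M u] rm_act[OF M u] lcl_car[OF us] lcl_car[OF us]] by simp
  finally show ?case by simp
qed

lemma lcl_scale: "set xs \<subseteq> mcar M \<Longrightarrow> lcl M \<iota> xs (\<lambda>x. c * f x) = mact M (lcl M \<iota> xs f) (\<iota> c)"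
proof (induction xs)
  case Nil
  then show ?case by (simp add: rm_zero_act[OF M])
next
  case (Cons u us)
  then have u: "u \<in> mcar M" and us: "set us \<subseteq> mcar M" by auto
  have "mact M u (\<iota> (c * f u)) = mact M (mact M u (\<iota> (f u))) (\<iota> c)"
    using rm_mult[OF M u] fd_mult[OF fd] fd_central[OF fd] by metis
  then show ?case using Cons.IH[OF us]
    by (simp add: rm_dist1[OF M] rm_act[OF M u] lcl_car[OF us])
qed

lemma lcl_zero: "set xs \<subseteq> mcar M \<Longrightarrow> lcl M \<iota> xs (\<lambda>x. 0) = mzero M"
  by (induction xs) (auto simp: fd_zero[OF fd] rm_act0[OF M] rm_lzero[OF M] rm_zero[OF M])

lemma lcl_cong: "(\<forall>u\<in>set xs. f u = g u) \<Longrightarrow> lcl M \<iota> xs f = lcl M \<iota> xs g"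
  by (induction xs) auto

lemma lcl_delta: "set xs \<subseteq> mcar M \<Longrightarrow> distinct xs \<Longrightarrow>
  lcl M \<iota> xs (\<lambda>x. if x = u then c else 0) = (if u \<in> set xs then mact M u (\<iota> c) else mzero M)"
proof (induction xs)
  case Nil
  then show ?case by simp
next
  case (Cons v vs)
  then have v: "v \<in> mcar M" and vs: "set vs \<subseteq> mcar M" "distinct vs" "v \<notin> set vs" by auto
  show ?case
  proof (cases "u = v")
    case True
    then show ?thesis using Cons.IH vs v by (simp add: rm_rzero[OF M] rm_act[OF M])
  next
    case False
    have "u \<in> set vs \<Longrightarrow> u \<in> mcar M" using vs by auto
    then show ?thesis using False Cons.IH vs v
      by (simp add: fd_zero[OF fd] rm_act0[OF M] rm_lzero[OF M] rm_zero[OF M] rm_act[OF M] lcl_car)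
  qed
qed

end

lemma lcl_surj:
  assumes fd: "fd_algebra \<iota>" and fg: "fgmod M"
  shows "\<exists>xs. set xs \<subseteq> mcar M \<and> (\<forall>x\<in>mcar M. \<exists>f. (\<forall>u. u \<notin> set xs \<longrightarrow> f u = 0) \<and> lcl M \<iota> xs f = x)"
proof -
  have M: "is_rmod M" using fg by (simp add: fgmod_def)
  obtain S where S: "finite S" "S \<subseteq> mcar M" "rspan M S = mcar M"
    using fg by (auto simp: fgmod_def fin_gen_def)
  obtain T where T0: "finite T" "\<forall>x. \<exists>c. x = (\<Sum>t\<in>T. \<iota> (c t) * t)"
    using fd_span[OF fd] by blast
  obtain c where "\<forall>x. x = (\<Sum>t\<in>T. \<iota> (c x t) * t)"
    using choice[OF T0(2)] by blast
  then have T: "finite T" "\<And>x. x = (\<Sum>t\<in>T. \<iota> (c x t) * t)" using T0 by auto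
  define U where "U = (\<lambda>(s, t). mact M s t) ` (S \<times> T)"
  have "finite U" using S T unfolding U_def by simp
  then obtain xs where xs: "set xs = U" "distinct xs" using finite_distinct_list by blast
  have Usub: "U \<subseteq> mcar M" using S rm_act[OF M] unfolding U_def by auto
  define Im where "Im = range (lcl M \<iota> xs)"
  have Im_sub: "Im \<subseteq> mcar M" using lcl_car[OF M fd] xs Usub unfolding Im_def by auto
  have xsM: "set xs \<subseteq> mcar M" using xs Usub by simp
  have inIm: "lcl M \<iota> xs f \<in> Im" for f unfolding Im_def by simp
  have Im0: "mzero M \<in> Im" using lcl_zero[OF M fd xsM] inIm[of "\<lambda>x. 0"] by simp
  have Imadd: "madd M x y \<in> Im" if xy: "x \<in> Im" "y \<in> Im" for x y
  proof -
    obtain f g where "x = lcl M \<iota> xs f" "y = lcl M \<iota> xs g" using xy unfolding Im_def by auto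
    then show ?thesis using lcl_add[OF M fd xsM, of f g] inIm[of "\<lambda>x. f x + g x"] by simp
  qed
  have single: "mact M u (\<iota> a) \<in> Im" if "u \<in> U" for u a
    using lcl_delta[OF M fd xsM xs(2), of u a] xs that inIm[of "\<lambda>x. if x = u then a else 0"] by simp
  have sumlem: "mact M s (\<Sum>t\<in>F. g t) \<in> Im" if s: "s \<in> mcar M" and F: "finite F"
    and h: "\<forall>t\<in>F. mact M s (g t) \<in> Im" for s F g
    using F h
  proof (induction F rule: finite_induct)
    case empty
    then show ?case using rm_act0[OF M s] Im0 by simp
  next
    case (insert t F)
    then show ?case using rm_dist2[OF M s] Imadd by simp
  qed
  have key: "mact M s b \<in> Im" if s: "s \<in> S" for s b
  proof -
    have sM: "s \<in> mcar M" using s S by auto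
    have "mact M s (\<Sum>t\<in>T. \<iota> (c b t) * t) \<in> Im"
    proof (rule sumlem[OF sM T(1)], intro ballI)
      fix t assume t: "t \<in> T"
      have "mact M s (\<iota> (c b t) * t) = mact M (mact M s t) (\<iota> (c b t))"
        using rm_mult[OF M sM] fd_central[OF fd] by metis
      moreover have "mact M s t \<in> U" using s t unfolding U_def by auto
      ultimately show "mact M s (\<iota> (c b t) * t) \<in> Im" using single by simp
    qed
    moreover have e: "b = (\<Sum>t\<in>T. \<iota> (c b t) * t)" by (rule T(2))
    ultimately show ?thesis by (simp only: e[symmetric])
  qed
  have actgen: "mact M (lcl M \<iota> ys f) a \<in> Im" if "set ys \<subseteq> U" for ys f a
    using that
  proof (induction ys)
    case Nil
    then show ?case using rm_zero_act[OF M] Im0 by simp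
  next
    case (Cons u us)
    then have u: "u \<in> U" and us: "set us \<subseteq> U" by auto
    then obtain s t where st: "s \<in> S" "t \<in> T" "u = mact M s t" unfolding U_def by auto
    have sM: "s \<in> mcar M" using st S by auto
    have uM: "u \<in> mcar M" using u Usub by auto
    have "mact M (mact M u (\<iota> (f u))) a = mact M s (t * \<iota> (f u) * a)"
      using st(3) rm_mult[OF M] sM rm_act[OF M] by (simp add: mult.assoc)
    then have "mact M (mact M u (\<iota> (f u))) a \<in> Im" using key st by simp
    moreover have "mact M (lcl M \<iota> us f) a \<in> Im" using Cons.IH us by simp
    ultimately show ?case
      using rm_dist1[OF M] rm_act[OF M uM] lcl_car[OF M fd] us Usub Imadd by simp
  qed
  have subIm: "is_submod M Im"
  proof -
    have "\<forall>x\<in>Im. \<forall>a. mact M x a \<in> Im"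
    proof (intro ballI allI)
      fix x a assume "x \<in> Im"
      then obtain f where "x = lcl M \<iota> xs f" unfolding Im_def by auto
      then show "mact M x a \<in> Im" using actgen[of xs f a] xs by simp
    qed
    then show ?thesis unfolding is_submod_def using Im_sub Im0 Imadd by blast
  qed
  have "S \<subseteq> Im"
  proof
    fix s assume s: "s \<in> S"
    then show "s \<in> Im" using key[OF s, of 1] rm_one[OF M, of s] S(2) by auto
  qed
  then have "rspan M S \<subseteq> Im" by (rule rspan_least[OF subIm])
  then have all: "mcar M \<subseteq> Im" using S(3) by simp
  show ?thesis
  proof (rule exI[of _ xs], intro conjI ballI)
    show "set xs \<subseteq> mcar M" using xs Usub by simp
    fix x assume "x \<in> mcar M"
    then obtain f where f: "x = lcl M \<iota> xs f" using all unfolding Im_def by auto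
    let ?f = "\<lambda>u. if u \<in> set xs then f u else 0"
    show "\<exists>f. (\<forall>u. u \<notin> set xs \<longrightarrow> f u = 0) \<and> lcl M \<iota> xs f = x"
    proof (rule exI[of _ ?f], intro conjI allI impI)
      show "lcl M \<iota> xs ?f = x" using lcl_cong[OF M fd, of xs ?f f] f by simp
    qed simp
  qed
qed



definition fscale :: "'k::field \<Rightarrow> ('a \<Rightarrow> 'k) \<Rightarrow> ('a \<Rightarrow> 'k)" where
  "fscale c f = (\<lambda>x. c * f x)"

lemma fun_vs: "vector_space (fscale :: 'k::field \<Rightarrow> ('a \<Rightarrow> 'k) \<Rightarrow> ('a \<Rightarrow> 'k))"
  by unfold_locales (simp_all add: fscale_def fun_eq_iff algebra_simps plus_fun_def)

lemma (in vector_space) dim_strict: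
  assumes S: "subspace S" and ST: "S \<subset> T" and TW: "T \<subseteq> span W" and W: "finite W"
  shows "dim S < dim T"
proof -
  obtain B where B: "B \<subseteq> S" "independent B" "S \<subseteq> span B" "card B = dim S" using basis_exists by blast
  obtain C where C: "C \<subseteq> T" "independent C" "T \<subseteq> span C" "card C = dim T" using basis_exists by blast
  obtain x where x: "x \<in> T" "x \<notin> S" using ST by blast
  have spB: "span B \<subseteq> S" using B(1) S by (simp add: span_minimal)
  have xB: "x \<notin> span B" using spB x by blast
  have ind: "independent (insert x B)" using independent_insertI[OF xB B(2)] .
  have "C \<subseteq> span W" using C(1) TW by (meson subset_trans)
  then have Cfin: "finite C" using independent_span_bound[OF W C(2)] by blast
  have STs: "S \<subseteq> T" using ST by (rule psubset_imp_subset)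
  have "B \<subseteq> span C" using B(1) STs C(3) by (meson subset_trans)
  moreover have "x \<in> span C" using x(1) C(3) by (meson subsetD)
  ultimately have "insert x B \<subseteq> span C" by simp
  then have fc: "finite (insert x B) \<and> card (insert x B) \<le> card C"
    by (rule independent_span_bound[OF Cfin ind])
  have xnB: "x \<notin> B" using x B(1) by blast
  have fB: "finite B" using fc by simp
  have "card (insert x B) = Suc (card B)" using card_insert_disjoint[OF fB xnB] .
  then show ?thesis using fc B(4) C(4) by linarith
qed

lemma sum_fun_apply: "finite F \<Longrightarrow> (\<Sum>u\<in>F. g u) x = (\<Sum>u\<in>F. g u x)"
  by (induction F rule: finite_induct) (simp_all add: plus_fun_def zero_fun_def)

lemma rank_exists:
  fixes \<iota> :: "'k::field \<Rightarrow> 'l::ring_1" and M :: "('l, 'm) rmod"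
  assumes fd: "fd_algebra \<iota>" and fg: "fgmod M"
  shows "\<exists>r::'m set \<Rightarrow> nat. \<exists>b. (\<forall>N. r N \<le> b) \<and>
    (\<forall>N N'. is_submod M N \<longrightarrow> is_submod M N' \<longrightarrow> N \<subset> N' \<longrightarrow> r N < r N')"
proof -
  interpret fv: vector_space "fscale :: 'k \<Rightarrow> ('m \<Rightarrow> 'k) \<Rightarrow> ('m \<Rightarrow> 'k)" by (rule fun_vs)
  have M: "is_rmod M" using fg by (simp add: fgmod_def)
  obtain xs where xs: "set xs \<subseteq> mcar M"
    "\<forall>x\<in>mcar M. \<exists>f. (\<forall>u. u \<notin> set xs \<longrightarrow> f u = 0) \<and> lcl M \<iota> xs f = x"
    using lcl_surj[OF fd fg] by blast
  define V0 where "V0 = {f::'m \<Rightarrow> 'k. \<forall>u. u \<notin> set xs \<longrightarrow> f u = 0}"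
  define P where "P N = {f \<in> V0. lcl M \<iota> xs f \<in> N}" for N
  define W where "W = (\<lambda>u. (\<lambda>x. if x = u then (1::'k) else 0)) ` set xs"
  have Wf: "finite W" unfolding W_def by (rule finite_imageI, rule finite_set)
  have V0W: "V0 \<subseteq> fv.span W"
  proof
    fix f assume f: "f \<in> V0"
    have eq: "f = (\<Sum>u\<in>set xs. (\<lambda>x. f u * (if x = u then 1 else 0)))"
    proof
      fix x
      have "(\<Sum>u\<in>set xs. (\<lambda>x. f u * (if x = u then 1 else 0))) x = (\<Sum>u\<in>set xs. f u * (if x = u then 1 else 0))"
        by (simp only: sum_fun_apply[OF finite_set])
      also have "\<dots> = (\<Sum>u\<in>set xs. (if x = u then f u else 0))"
        by (rule sum.cong) auto
      also have "\<dots> = f x" using f unfolding V0_def by (auto simp: sum.delta')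
      finally show "f x = (\<Sum>u\<in>set xs. (\<lambda>x. f u * (if x = u then 1 else 0))) x" by simp
    qed
    have "(\<Sum>u\<in>set xs. (\<lambda>x. f u * (if x = u then 1 else 0))) \<in> fv.span W"
    proof (rule fv.span_sum)
      fix u assume "u \<in> set xs"
      then have "(\<lambda>x. if x = u then (1::'k) else 0) \<in> fv.span W"
        unfolding W_def by (intro fv.span_base) auto
      then show "(\<lambda>x. f u * (if x = u then 1 else 0)) \<in> fv.span W"
        using fv.span_scale[of "\<lambda>x. if x = u then (1::'k) else 0" W "f u"] by (simp add: fscale_def)
    qed
    then show "f \<in> fv.span W" using eq by simp
  qed
  have sub: "fv.subspace (P N)" if N: "is_submod M N" for N
    unfolding fv.subspace_def
  proof (intro conjI ballI allI)
    show "0 \<in> P N" unfolding P_def V0_def using lcl_zero[OF M fd xs(1)] N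
      by (simp add: zero_fun_def is_submod_def)
  next
    fix f g assume "f \<in> P N" "g \<in> P N"
    then show "f + g \<in> P N" unfolding P_def V0_def using lcl_add[OF M fd xs(1), of f g] N
      by (simp add: plus_fun_def is_submod_def)
  next
    fix c f assume "f \<in> P N"
    then show "fscale c f \<in> P N" unfolding fscale_def P_def V0_def using lcl_scale[OF M fd xs(1), of c f] N
      by (simp add: is_submod_def)
  qed
  show ?thesis
  proof (intro exI conjI allI impI)
    fix N
    have "P N \<subseteq> fv.span W" using V0W unfolding P_def by auto
    then show "fv.dim (P N) \<le> card W" using fv.dim_le_card Wf by blast
  next
    fix N N' assume N: "is_submod M N" and N': "is_submod M N'" and NN: "N \<subset> N'"
    have "P N \<subset> P N'"
    proof
      show "P N \<subseteq> P N'" using NN unfolding P_def by auto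
      obtain x where x: "x \<in> N'" "x \<notin> N" using NN by blast
      then have "x \<in> mcar M" using N' by (auto simp: is_submod_def)
      then obtain f where "(\<forall>u. u \<notin> set xs \<longrightarrow> f u = 0)" "lcl M \<iota> xs f = x" using xs(2) by blast
      then have "f \<in> P N'" "f \<notin> P N" using x unfolding P_def V0_def by auto
      then show "P N \<noteq> P N'" by blast
    qed
    moreover have "P N' \<subseteq> fv.span W" using V0W unfolding P_def by auto
    ultimately show "fv.dim (P N) < fv.dim (P N')" using fv.dim_strict[OF sub[OF N]] Wf by blast
  qed
qed

lemma submod_fg:
  fixes \<iota> :: "'k::field \<Rightarrow> 'l::ring_1" and M :: "('l, 'm) rmod"
  assumes fd: "fd_algebra \<iota>" and fg: "fgmod M" and N: "is_submod M N"
  shows "fgmod (subm M N)"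
proof -
  have M: "is_rmod M" using fg by (simp add: fgmod_def)
  have NM: "N \<subseteq> mcar M" using N by (simp add: is_submod_def)
  obtain r :: "'m set \<Rightarrow> nat" and b where r: "\<forall>N. r N \<le> b"
    "\<forall>N N'. is_submod M N \<longrightarrow> is_submod M N' \<longrightarrow> N \<subset> N' \<longrightarrow> r N < r N'"
    using rank_exists[OF fd fg] by blast
  let ?C = "\<lambda>F. finite F \<and> F \<subseteq> N"
  have "?C {}" by simp
  moreover have "\<forall>F. ?C F \<longrightarrow> (r \<circ> rspan M) F < Suc b" using r(1) by (simp add: le_imp_less_Suc)
  ultimately obtain F where F: "?C F" and Fmax: "\<forall>F'. ?C F' \<longrightarrow> r (rspan M F') \<le> r (rspan M F)"
    using ex_has_greatest_nat[of ?C "{}" "r \<circ> rspan M" "Suc b"] by auto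
  have spF: "rspan M F \<subseteq> N" using rspan_least[OF N] F by simp
  have eqN: "rspan M F = N"
  proof (rule ccontr)
    assume "rspan M F \<noteq> N"
    then obtain x where x: "x \<in> N" "x \<notin> rspan M F" using spF by blast
    let ?F' = "insert x F"
    have C': "?C ?F'" using F x by simp
    have ps: "rspan M F \<subset> rspan M ?F'"
      using rspan_mono[of F ?F' M] rspan_sup[of ?F' M] x by blast
    have s1: "is_submod M (rspan M F)" using rspan_submod[OF M] F NM by (meson subset_trans)
    have s2: "is_submod M (rspan M ?F')" using rspan_submod[OF M] C' NM by (meson subset_trans)
    have lt: "r (rspan M F) < r (rspan M ?F')" using r(2) s1 s2 ps by simp
    have "r (rspan M ?F') \<le> r (rspan M F)" using Fmax C' by simp
    then show False using lt by simp
  qed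
  have rs: "rspan (subm M N) F = N"
  proof
    show "rspan (subm M N) F \<subseteq> N"
      by (rule rspan_least) (use submod_subm[OF N] F in auto)
    show "N \<subseteq> rspan (subm M N) F"
      unfolding rspan_def
    proof (rule Inter_greatest)
      fix K assume "K \<in> {Na. is_submod (subm M N) Na \<and> F \<subseteq> Na}"
      then have K: "is_submod (subm M N) K" "F \<subseteq> K" by auto
      then have Km: "is_submod M K" using submod_trans[OF N] by blast
      have "rspan M F \<subseteq> K" by (rule rspan_least[OF Km K(2)])
      then show "N \<subseteq> K" using eqN by simp
    qed
  qed
  show ?thesis unfolding fgmod_def fin_gen_def
    using submod_rmod[OF M N] F rs by auto
qed

lemma fg_image:
  assumes X: "fgmod X" and Q: "is_rmod Q" and h: "is_hom X Q p" and s: "p ` mcar X = mcar Q"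
  shows "fgmod Q"
proof -
  have Xm: "is_rmod X" using X by (simp add: fgmod_def)
  obtain S where S: "finite S" "S \<subseteq> mcar X" "rspan X S = mcar X"
    using X by (auto simp: fgmod_def fin_gen_def)
  define K where "K = rspan Q (p ` S)"
  have pS: "p ` S \<subseteq> mcar Q" using S s by auto
  have K: "is_submod Q K" unfolding K_def by (rule rspan_submod[OF Q pS])
  have K1: "K \<subseteq> mcar Q" unfolding K_def by (rule rspan_least[OF rmod_submod_car[OF Q] pS])
  define Pr where "Pr = {x \<in> mcar X. p x \<in> K}"
  have Pr: "is_submod X Pr" unfolding is_submod_def Pr_def
    using K hom_zero[OF Xm Q h] rm_zero[OF Xm] rm_add[OF Xm] rm_act[OF Xm] hom_add[OF h] hom_act[OF h]
    by (auto simp: is_submod_def)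
  have "S \<subseteq> Pr" unfolding Pr_def K_def using S rspan_sup[of "p ` S" Q] by auto
  then have "rspan X S \<subseteq> Pr" by (rule rspan_least[OF Pr])
  then have "mcar X \<subseteq> Pr" using S(3) by simp
  then have XP: "\<forall>x\<in>mcar X. p x \<in> K" unfolding Pr_def by auto
  have "mcar Q \<subseteq> K"
  proof
    fix q assume "q \<in> mcar Q"
    then obtain x where "x \<in> mcar X" "q = p x" using s by (metis imageE)
    then show "q \<in> K" using XP by simp
  qed
  then have "rspan Q (p ` S) = mcar Q" using K1 unfolding K_def by simp
  then show ?thesis unfolding fgmod_def fin_gen_def using Q S pS by blast
qed



lemma hom_restrict: "is_hom X Q p \<Longrightarrow> B \<subseteq> mcar X \<Longrightarrow> (\<forall>x\<in>B. p x \<in> S) \<Longrightarrow> is_hom (subm X B) (subm Q S) p"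
  unfolding is_hom_def subm_simps by (meson subsetD)

lemma hker_restrict: "B \<subseteq> mcar X \<Longrightarrow> hker (subm X B) (subm Q S) p = B \<inter> hker X Q p"
  unfolding hker_def by auto

lemma ses_sub:
  assumes A: "is_submod X A" and AB: "A \<subseteq> B" and g: "is_hom (subm X B) C g"
    and s: "g ` B = mcar C" and k: "hker (subm X B) C g = A"
  shows "is_ses (subm X A) (subm X B) C id g"
  unfolding is_ses_def
proof (intro conjI)
  show "is_hom (subm X A) (subm X B) id" using AB unfolding is_hom_def by auto
  show "inj_on id (mcar (subm X A))" by simp
  show "is_hom (subm X B) C g" by (rule g)
  show "g ` mcar (subm X B) = mcar C" using s by simp
  show "id ` mcar (subm X A) = hker (subm X B) C g" using k by simp
qed

lemma strict_comp:
  assumes K: "strict_subobj G (subm Y N) K" and N: "strict_subobj G Y N"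
  shows "strict_subobj G Y K"
proof -
  have Nsub: "is_submod Y N" "subm Y N \<in> G" using N by (simp_all add: strict_subobj_def subobj_def)
  have Ksub: "is_submod (subm Y N) K" "subm Y K \<in> G" using K by (simp_all add: strict_subobj_def subobj_def)
  have KY: "is_submod Y K" by (rule submod_trans[OF Nsub(1) Ksub(1)])
  have KN: "K \<subseteq> N" using Ksub(1) by (simp add: is_submod_def)
  show ?thesis unfolding strict_subobj_def subobj_def
  proof (intro conjI allI impI)
    show "is_submod Y K" by (rule KY)
    show "subm Y K \<in> G" by (rule Ksub(2))
    fix B' assume B': "is_submod Y B' \<and> subm Y B' \<in> G"
    have "subm Y (N \<inter> B') \<in> G" using N B' by (simp add: strict_subobj_def subobj_def)
    moreover have "is_submod (subm Y N) (N \<inter> B')"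
      using submod_subm[OF submod_inter[OF Nsub(1)]] B' by blast
    ultimately have "subobj G (subm Y N) (N \<inter> B')" by (simp add: subobj_def)
    then have "subm Y (K \<inter> (N \<inter> B')) \<in> G" using K by (simp add: strict_subobj_def)
    moreover have "K \<inter> (N \<inter> B') = K \<inter> B'" using KN by blast
    ultimately show "subm Y (K \<inter> B') \<in> G" by simp
  qed
qed

lemma strict_full:
  assumes Q: "Q \<in> G" and Qm: "is_rmod Q"
  shows "strict_subobj G Q (mcar Q)"
  unfolding strict_subobj_def subobj_def
proof (intro conjI allI impI)
  show "is_submod Q (mcar Q)" by (rule rmod_submod_car[OF Qm])
  show "subm Q (mcar Q) \<in> G" using Q by simp
  fix B' assume "is_submod Q B' \<and> subm Q B' \<in> G"
  moreover then have "mcar Q \<inter> B' = B'" by (auto simp: is_submod_def)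
  ultimately show "subm Q (mcar Q \<inter> B') \<in> G" by simp
qed

context
  fixes G :: "('l::ring_1, 'm) rmod set" and \<theta> :: "('l, 'm) rmod \<Rightarrow> real" and \<iota> :: "'k::field \<Rightarrow> 'l"
  assumes tc: "torsion_class G" and fd: "fd_algebra \<iota>" and th: "\<theta> \<in> VLam"
begin

lemma tc_fg: "M \<in> G \<Longrightarrow> fgmod M"
  using tc unfolding torsion_class_def by blast
lemma tc_rmod: "M \<in> G \<Longrightarrow> is_rmod M"
  using tc_fg unfolding fgmod_def by blast
lemma tc_zero: "fgmod M \<Longrightarrow> is_zero M \<Longrightarrow> M \<in> G"
  using tc unfolding torsion_class_def by blast
lemma tc_ext: "A \<in> G \<Longrightarrow> C \<in> G \<Longrightarrow> fgmod B \<Longrightarrow> is_ses A B C f g \<Longrightarrow> B \<in> G"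
  using tc unfolding torsion_class_def by blast
lemma tc_quot: "M \<in> G \<Longrightarrow> fgmod N \<Longrightarrow> is_hom M N g \<Longrightarrow> g ` mcar M = mcar N \<Longrightarrow> N \<in> G"
  using tc unfolding torsion_class_def by blast
lemma th_ses: "fgmod A \<Longrightarrow> fgmod B \<Longrightarrow> fgmod C \<Longrightarrow> is_ses A B C f g \<Longrightarrow> \<theta> B = \<theta> A + \<theta> C"
  using th unfolding VLam_def by blast

lemma th_zero: assumes Z: "fgmod Z" "is_zero Z" shows "\<theta> Z = 0"
proof -
  have "is_ses Z Z Z id id"
    using Z unfolding is_ses_def is_hom_def hker_def is_zero_def by auto
  then have "\<theta> Z = \<theta> Z + \<theta> Z" using th_ses Z by blast
  then show ?thesis by simp
qed

lemma sub_fg: "M \<in> G \<Longrightarrow> is_submod M N \<Longrightarrow> fgmod (subm M N)"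
  using submod_fg[OF fd] tc_fg by blast

lemma zero_sub_G: assumes Y: "Y \<in> G" shows "subm Y {mzero Y} \<in> G"
proof -
  have "fgmod (subm Y {mzero Y})" using sub_fg[OF Y submod_zero[OF tc_rmod[OF Y]]] .
  moreover have "is_zero (subm Y {mzero Y})" by (simp add: is_zero_def)
  ultimately show ?thesis using tc_zero by blast
qed

lemma noPQ:
  assumes X: "X \<in> Pcl G \<theta>" and Y: "Y \<in> Qbar G \<theta>" and f: "strict_morph G X Y f"
  shows "\<forall>x\<in>mcar X. f x = mzero Y"
proof -
  let ?I = "f ` mcar X"
  have fs: "strict_subobj G Y ?I" "is_hom X Y f" "strict_subobj G X (hker X Y f)"
    using f by (simp_all add: strict_morph_def)
  have Isub: "is_submod Y ?I" "subm Y ?I \<in> G" using fs(1) by (simp_all add: strict_subobj_def subobj_def)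
  have th_le: "\<theta> (subm Y ?I) \<le> 0" using Y fs(1) by (simp add: Qbar_def)
  have z: "mzero Y \<in> ?I" using Isub(1) by (simp add: is_submod_def)
  show ?thesis
  proof (rule ccontr)
    assume nz: "\<not> (\<forall>x\<in>mcar X. f x = mzero Y)"
    have nzI: "\<not> is_zero (subm Y ?I)" using nz by (auto simp: is_zero_def)
    have XG: "X \<in> G" using X by (simp add: Pcl_def)
    have notzX: "\<not> is_zero X"
    proof
      assume "is_zero X"
      then have "?I = {f (mzero X)}" by (simp add: is_zero_def)
      then have "?I = {mzero Y}" using z by auto
      then show False using nzI by (simp add: is_zero_def)
    qed
    then have P: "\<forall>M''. strict_quot G X M'' \<and> \<not> is_zero M'' \<longrightarrow> \<theta> M'' > 0"
      using X by (simp add: Pcl_def)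
    have "strict_quot G X (subm Y ?I)"
      unfolding strict_quot_def
    proof (intro conjI exI[of _ f])
      show "fgmod (subm Y ?I)" using tc_fg Isub(2) by blast
      show "is_hom X (subm Y ?I) f" using fs(2) unfolding is_hom_def by auto
      show "f ` mcar X = mcar (subm Y ?I)" by simp
      have "hker X (subm Y ?I) f = hker X Y f" unfolding hker_def by simp
      then show "strict_subobj G X (hker X (subm Y ?I) f)" using fs(3) by simp
    qed
    then have "\<theta> (subm Y ?I) > 0" using P nzI by blast
    then show False using th_le by simp
  qed
qed

lemma hom_image_submod:
  assumes Xm: "is_rmod X" and Qm: "is_rmod Q" and h: "is_hom X Q p" and B: "is_submod X B"
  shows "is_submod Q (p ` B)"
proof -
  have BX: "B \<subseteq> mcar X" using B by (simp add: is_submod_def)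
  show ?thesis unfolding is_submod_def
  proof (intro conjI ballI allI)
    show "p ` B \<subseteq> mcar Q" using BX hom_car[OF h] by auto
    have "mzero X \<in> B" using B by (simp add: is_submod_def)
    then show "mzero Q \<in> p ` B" using hom_zero[OF Xm Qm h] by force
  next
    fix x y assume "x \<in> p ` B" "y \<in> p ` B"
    then obtain a b where ab: "a \<in> B" "b \<in> B" "x = p a" "y = p b" by blast
    then have "madd X a b \<in> B" using B by (simp add: is_submod_def)
    moreover have "p (madd X a b) = madd Q x y" using ab BX hom_add[OF h] by auto
    ultimately show "madd Q x y \<in> p ` B" by force
  next
    fix x c assume "x \<in> p ` B"
    then obtain a where ab: "a \<in> B" "x = p a" by blast
    then have "mact X a c \<in> B" using B by (simp add: is_submod_def)
    moreover have "p (mact X a c) = mact Q x c" using ab BX hom_act[OF h] by auto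
    ultimately show "mact Q x c \<in> p ` B" by force
  qed
qed

lemma preimage_strict:
  assumes X: "X \<in> G" and Q: "Q \<in> G" and h: "is_hom X Q p" and s: "p ` mcar X = mcar Q"
    and A: "strict_subobj G X A" and k: "hker X Q p = A" and S: "strict_subobj G Q S"
  shows "strict_subobj G X {x \<in> mcar X. p x \<in> S}"
proof -
  let ?B = "{x \<in> mcar X. p x \<in> S}"
  have Xm: "is_rmod X" and Qm: "is_rmod Q" using X Q tc_rmod by auto
  have Ssub: "is_submod Q S" "subm Q S \<in> G" using S by (simp_all add: strict_subobj_def subobj_def)
  have Asub: "is_submod X A" "subm X A \<in> G" using A by (simp_all add: strict_subobj_def subobj_def)
  have Bsub: "is_submod X ?B"
    unfolding is_submod_def
  proof (intro conjI ballI allI)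
    show "?B \<subseteq> mcar X" by auto
    show "mzero X \<in> ?B" using hom_zero[OF Xm Qm h] rm_zero[OF Xm] Ssub(1) by (simp add: is_submod_def)
  next
    fix x y assume "x \<in> ?B" "y \<in> ?B"
    then show "madd X x y \<in> ?B" using hom_add[OF h] rm_add[OF Xm] Ssub(1) by (simp add: is_submod_def)
  next
    fix x a assume "x \<in> ?B"
    then show "mact X x a \<in> ?B" using hom_act[OF h] rm_act[OF Xm] Ssub(1) by (simp add: is_submod_def)
  qed
  have AB: "A \<subseteq> ?B"
  proof
    fix x assume "x \<in> A"
    then have "x \<in> mcar X" "p x = mzero Q" using k unfolding hker_def by auto
    then show "x \<in> ?B" using Ssub(1) by (simp add: is_submod_def)
  qed
  have SQ: "S \<subseteq> mcar Q" using Ssub(1) by (simp add: is_submod_def)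
  have claim: "subm X (?B \<inter> B') \<in> G" if B': "subobj G X B'" for B'
  proof -
    have B'sub: "is_submod X B'" "subm X B' \<in> G" using B' by (simp_all add: subobj_def)
    have B'X: "B' \<subseteq> mcar X" using B'sub(1) by (simp add: is_submod_def)
    let ?I = "p ` B'"
    have Isub: "is_submod Q ?I" by (rule hom_image_submod[OF Xm Qm h B'sub(1)])
    have "fgmod (subm Q ?I)" by (rule sub_fg[OF Q Isub])
    moreover have "is_hom (subm X B') (subm Q ?I) p" using hom_restrict[OF h B'X] by blast
    ultimately have IG: "subm Q ?I \<in> G" using tc_quot[OF B'sub(2)] by simp
    have "subobj G Q ?I" using Isub IG by (simp add: subobj_def)
    then have SI: "subm Q (S \<inter> ?I) \<in> G" using S by (simp add: strict_subobj_def)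
    have AI: "subm X (A \<inter> B') \<in> G" using A B' by (simp add: strict_subobj_def)
    have BB'X: "?B \<inter> B' \<subseteq> mcar X" by auto
    have ses: "is_ses (subm X (A \<inter> B')) (subm X (?B \<inter> B')) (subm Q (S \<inter> ?I)) id p"
    proof (rule ses_sub)
      show "is_submod X (A \<inter> B')" by (rule submod_inter[OF Asub(1) B'sub(1)])
      show "A \<inter> B' \<subseteq> ?B \<inter> B'" using AB by blast
      show "is_hom (subm X (?B \<inter> B')) (subm Q (S \<inter> ?I)) p"
        by (rule hom_restrict[OF h BB'X]) auto
      show "p ` (?B \<inter> B') = mcar (subm Q (S \<inter> ?I))"
      proof
        show "p ` (?B \<inter> B') \<subseteq> mcar (subm Q (S \<inter> ?I))" by auto
        show "mcar (subm Q (S \<inter> ?I)) \<subseteq> p ` (?B \<inter> B')"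
        proof
          fix y assume "y \<in> mcar (subm Q (S \<inter> ?I))"
          then obtain b where "b \<in> B'" "y = p b" "y \<in> S" by auto
          then show "y \<in> p ` (?B \<inter> B')" using B'X by blast
        qed
      qed
      have "hker (subm X (?B \<inter> B')) (subm Q (S \<inter> ?I)) p = (?B \<inter> B') \<inter> A"
        using hker_restrict[OF BB'X] k by simp
      then show "hker (subm X (?B \<inter> B')) (subm Q (S \<inter> ?I)) p = A \<inter> B'" using AB by blast
    qed
    have "fgmod (subm X (?B \<inter> B'))" by (rule sub_fg[OF X submod_inter[OF Bsub B'sub(1)]])
    then show ?thesis using tc_ext[OF AI SI _ ses] by blast
  qed
  have "subobj G X (mcar X)" using X rmod_submod_car[OF Xm] by (simp add: subobj_def)
  then have "subm X (?B \<inter> mcar X) \<in> G" by (rule claim)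
  moreover have "?B \<inter> mcar X = ?B" by auto
  ultimately have BG: "subm X ?B \<in> G" by simp
  show ?thesis unfolding strict_subobj_def subobj_def using Bsub BG claim by (simp add: subobj_def)
qed

end



context
  fixes G :: "('l::ring_1, 'm) rmod set" and \<theta> :: "('l, 'm) rmod \<Rightarrow> real" and \<iota> :: "'k::field \<Rightarrow> 'l"
  assumes tc: "torsion_class G" and fd: "fd_algebra \<iota>" and th: "\<theta> \<in> VLam"
begin

lemma zero_of_surj:
  assumes g: "g ` N = mcar M''" and Mr: "is_rmod M''" and all: "\<forall>x\<in>N. g x = mzero M''"
  shows "is_zero M''"
proof -
  have "mcar M'' \<subseteq> {mzero M''}" using g all by auto
  then show ?thesis using rm_zero[OF Mr] unfolding is_zero_def by auto
qed

lemma rperp_Qbar: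
  assumes Y: "Y \<in> rperp G (Pcl G \<theta>)"
  shows "Y \<in> Qbar G \<theta>"
proof -
  have YG: "Y \<in> G" using Y by (simp add: rperp_def)
  have fgY: "fgmod Y" using tc_fg[OF tc fd th YG] .
  have Ym: "is_rmod Y" using fgY by (simp add: fgmod_def)
  show ?thesis
  proof (rule ccontr)
    assume "Y \<notin> Qbar G \<theta>"
    then obtain N0 where N0: "strict_subobj G Y N0" "\<theta> (subm Y N0) > 0"
      using YG unfolding Qbar_def by force
    obtain r :: "'m set \<Rightarrow> nat" and b where r: "\<forall>N. r N \<le> b"
      "\<forall>N N'. is_submod Y N \<longrightarrow> is_submod Y N' \<longrightarrow> N \<subset> N' \<longrightarrow> r N < r N'"
      using rank_exists[OF fd fgY] by blast
    let ?C = "\<lambda>N. strict_subobj G Y N \<and> \<theta> (subm Y N) > 0"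
    obtain N where N: "?C N" and Nmin: "\<forall>N'. ?C N' \<longrightarrow> r N \<le> r N'"
      using ex_has_least_nat[of ?C N0 r] N0 by blast
    have Nsub: "is_submod Y N" "subm Y N \<in> G" using N by (simp_all add: strict_subobj_def subobj_def)
    have NY: "N \<subseteq> mcar Y" using Nsub(1) by (simp add: is_submod_def)
    have N0in: "mzero Y \<in> N" using Nsub(1) by (simp add: is_submod_def)
    have inP: "subm Y N \<in> Pcl G \<theta>"
      unfolding Pcl_def
    proof (simp only: mem_Collect_eq, intro conjI disjI2 allI impI)
      show "subm Y N \<in> G" by (rule Nsub(2))
      fix M'' assume M'': "strict_quot G (subm Y N) M'' \<and> \<not> is_zero M''"
      then obtain g where g: "fgmod M''" "is_hom (subm Y N) M'' g" "g ` N = mcar M''"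
        "strict_subobj G (subm Y N) (hker (subm Y N) M'' g)"
        unfolding strict_quot_def by auto
      define K where "K = hker (subm Y N) M'' g"
      have KY: "strict_subobj G Y K" unfolding K_def by (rule strict_comp[OF g(4) N[THEN conjunct1]])
      have Ksub: "is_submod Y K" "subm Y K \<in> G" using KY by (simp_all add: strict_subobj_def subobj_def)
      have KN: "K \<subseteq> N" unfolding K_def hker_def by auto
      have ses: "is_ses (subm Y K) (subm Y N) M'' id g"
        by (rule ses_sub[OF Ksub(1) KN g(2) g(3)]) (simp add: K_def)
      have eq: "\<theta> (subm Y N) = \<theta> (subm Y K) + \<theta> M''"
        using th_ses[OF tc fd th _ _ g(1) ses] tc_fg[OF tc fd th] Ksub(2) Nsub(2) by blast
      have "K \<noteq> N"
      proof
        assume "K = N"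
        then have "\<forall>x\<in>N. g x = mzero M''" unfolding K_def hker_def by auto
        then have "is_zero M''" using zero_of_surj[OF g(3)] g(1) by (simp add: fgmod_def)
        then show False using M'' by simp
      qed
      then have "K \<subset> N" using KN by blast
      then have "r K < r N" using r(2) Ksub(1) Nsub(1) by blast
      then have "\<not> ?C K" using Nmin by (meson not_le)
      then have "\<theta> (subm Y K) \<le> 0" using KY by simp
      then show "\<theta> M'' > 0" using eq N by simp
    qed
    have sm: "strict_morph G (subm Y N) Y id"
      unfolding strict_morph_def
    proof (intro conjI)
      show "subm Y N \<in> G" by (rule Nsub(2))
      show "Y \<in> G" by (rule YG)
      show "is_hom (subm Y N) Y id" using NY unfolding is_hom_def by auto
      have hk: "hker (subm Y N) Y id = {mzero Y}" unfolding hker_def using N0in by auto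
      have zG: "subm Y {mzero Y} \<in> G" by (rule zero_sub_G[OF tc fd th YG])
      then show "subm (subm Y N) (hker (subm Y N) Y id) \<in> G" using hk by simp
      show "strict_subobj G (subm Y N) (hker (subm Y N) Y id)"
        unfolding hk strict_subobj_def subobj_def
      proof (intro conjI allI impI)
        show "is_submod (subm Y N) {mzero Y}"
          using submod_subm[OF submod_zero[OF Ym]] N0in by simp
        show "subm (subm Y N) {mzero Y} \<in> G" using zG by simp
        fix B' assume "is_submod (subm Y N) B' \<and> subm (subm Y N) B' \<in> G"
        then have "mzero Y \<in> B'" by (simp add: is_submod_def)
        then have "{mzero Y} \<inter> B' = {mzero Y}" by auto
        then show "subm (subm Y N) ({mzero Y} \<inter> B') \<in> G" using zG by simp
      qed
      show "strict_subobj G Y (id ` mcar (subm Y N))" using N by simp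
    qed
    have rp: "\<forall>X\<in>Pcl G \<theta>. \<forall>f. strict_morph G X Y f \<longrightarrow> (\<forall>x\<in>mcar X. f x = mzero Y)"
      using Y unfolding rperp_def by simp
    from rp inP have "\<forall>f. strict_morph G (subm Y N) Y f \<longrightarrow> (\<forall>x\<in>mcar (subm Y N). f x = mzero Y)"
      by (rule bspec)
    note this[THEN spec[of _ id], THEN mp, OF sm]
    then have "\<forall>x\<in>mcar (subm Y N). x = mzero Y" by simp
    then have "N \<subseteq> {mzero Y}" by auto
    then have "N = {mzero Y}" using N0in by auto
    then have iz: "is_zero (subm Y N)" by (simp add: is_zero_def)
    have "fgmod (subm Y N)" by (rule tc_fg[OF tc fd th Nsub(2)])
    then have "\<theta> (subm Y N) = 0" by (rule th_zero[OF tc fd th _ iz])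
    then show False using N by simp
  qed
qed


lemma lperp_Pcl:
  assumes X: "X \<in> lperp G (Qbar G \<theta>)"
  shows "X \<in> Pcl G \<theta>"
proof -
  have XG: "X \<in> G" using X by (simp add: lperp_def)
  have fgX: "fgmod X" using tc_fg[OF tc fd th XG] .
  have Xm: "is_rmod X" using fgX by (simp add: fgmod_def)
  show ?thesis
  proof (cases "is_zero X")
    case True
    then show ?thesis using XG by (simp add: Pcl_def)
  next
    case False
    show ?thesis
    proof (rule ccontr)
      assume "X \<notin> Pcl G \<theta>"
      then obtain M'' where M'': "strict_quot G X M''" "\<not> is_zero M''" "\<not> \<theta> M'' > 0"
        using XG False unfolding Pcl_def by blast
      then obtain g where g: "fgmod M''" "is_hom X M'' g" "g ` mcar X = mcar M''"
        "strict_subobj G X (hker X M'' g)"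
        unfolding strict_quot_def by auto
      define K where "K = hker X M'' g"
      have Ksub: "is_submod X K" "subm X K \<in> G" using g(4) unfolding K_def
        by (simp_all add: strict_subobj_def subobj_def)
      have KX: "K \<subseteq> mcar X" unfolding K_def hker_def by auto
      have g': "is_hom (subm X (mcar X)) M'' g" "g ` mcar X = mcar M''" using g by simp_all
      have ses: "is_ses (subm X K) (subm X (mcar X)) M'' id g"
        by (rule ses_sub[OF Ksub(1) KX g'(1) g'(2)]) (simp add: K_def)
      have fgK: "fgmod (subm X K)" by (rule tc_fg[OF tc fd th Ksub(2)])
      have "\<theta> (subm X (mcar X)) = \<theta> (subm X K) + \<theta> M''"
        by (rule th_ses[OF tc fd th fgK _ g(1) ses]) (simp add: fgX)
      then have eqK: "\<theta> X = \<theta> (subm X K) + \<theta> M''" by simp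
      have KneX: "K \<noteq> mcar X"
      proof
        assume "K = mcar X"
        then have "\<forall>x\<in>mcar X. g x = mzero M''" unfolding K_def hker_def by auto
        then have "is_zero M''" using zero_of_surj[OF g(3)] g(1) by (simp add: fgmod_def)
        then show False using M''(2) by simp
      qed
      obtain r :: "'m set \<Rightarrow> nat" and b where r: "\<forall>N. r N \<le> b"
        "\<forall>N N'. is_submod X N \<longrightarrow> is_submod X N' \<longrightarrow> N \<subset> N' \<longrightarrow> r N < r N'"
        using rank_exists[OF fd fgX] by blast
      let ?C = "\<lambda>A. strict_subobj G X A \<and> A \<noteq> mcar X \<and> \<theta> X \<le> \<theta> (subm X A)"
      have CK: "?C K" using g(4) KneX eqK M''(3) unfolding K_def by simp
      have bnd: "\<forall>A. ?C A \<longrightarrow> r A < Suc b" using r(1) by (simp add: le_imp_less_Suc)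
      obtain A where A: "?C A" and Amax: "\<forall>A'. ?C A' \<longrightarrow> r A' \<le> r A"
        using ex_has_greatest_nat[of ?C K r "Suc b", OF CK bnd] by blast
      have As: "strict_subobj G X A" using A by simp
      have Asub: "is_submod X A" "subm X A \<in> G" using As by (simp_all add: strict_subobj_def subobj_def)
      have AX: "A \<subseteq> mcar X" using Asub(1) by (simp add: is_submod_def)
      define Q where "Q = quotm X A"
      define p where "p = qrep X A"
      have Qm: "is_rmod Q" unfolding Q_def by (rule quot_rmod[OF Xm Asub(1)])
      have h: "is_hom X Q p" unfolding Q_def p_def by (rule quot_hom[OF Xm Asub(1)])
      have s: "p ` mcar X = mcar Q" unfolding Q_def p_def by (rule quot_surj[OF Xm Asub(1)])
      have k: "hker X Q p = A" unfolding Q_def p_def by (rule quot_ker[OF Xm Asub(1)])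
      have fgQ: "fgmod Q" by (rule fg_image[OF fgX Qm h s])
      have QG: "Q \<in> G" by (rule tc_quot[OF tc fd th XG fgQ h s])
      have sm: "strict_morph G X Q p"
        unfolding strict_morph_def
      proof (intro conjI)
        show "X \<in> G" by (rule XG)
        show "Q \<in> G" by (rule QG)
        show "is_hom X Q p" by (rule h)
        show "subm X (hker X Q p) \<in> G" using Asub(2) k by simp
        show "strict_subobj G X (hker X Q p)" using As k by simp
        show "strict_subobj G Q (p ` mcar X)" using strict_full[OF QG Qm] s by simp
      qed
      have inQ: "Q \<in> Qbar G \<theta>"
        unfolding Qbar_def
      proof (simp only: mem_Collect_eq, intro conjI allI impI)
        show "Q \<in> G" by (rule QG)
        fix S assume S: "strict_subobj G Q S"
        define B where "B = {x \<in> mcar X. p x \<in> S}"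
        have Bs: "strict_subobj G X B" unfolding B_def
          by (rule preimage_strict[OF tc fd th XG QG h s As k S])
        have Bsub: "is_submod X B" "subm X B \<in> G" using Bs by (simp_all add: strict_subobj_def subobj_def)
        have Ssub: "is_submod Q S" "subm Q S \<in> G" using S by (simp_all add: strict_subobj_def subobj_def)
        have SQ: "S \<subseteq> mcar Q" using Ssub(1) by (simp add: is_submod_def)
        have BX: "B \<subseteq> mcar X" unfolding B_def by auto
        have AB: "A \<subseteq> B"
        proof
          fix x assume "x \<in> A"
          then have "x \<in> mcar X" "p x = mzero Q" using k unfolding hker_def by auto
          then show "x \<in> B" using Ssub(1) unfolding B_def by (simp add: is_submod_def)
        qed
        have ses: "is_ses (subm X A) (subm X B) (subm Q S) id p"
        proof (rule ses_sub[OF Asub(1) AB])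
          show "is_hom (subm X B) (subm Q S) p" by (rule hom_restrict[OF h BX]) (simp add: B_def)
          show "p ` B = mcar (subm Q S)"
          proof
            show "p ` B \<subseteq> mcar (subm Q S)" unfolding B_def by auto
            show "mcar (subm Q S) \<subseteq> p ` B"
            proof
              fix y assume "y \<in> mcar (subm Q S)"
              then have y: "y \<in> S" by simp
              then have "y \<in> p ` mcar X" using SQ s by auto
              then obtain x where "x \<in> mcar X" "y = p x" by auto
              then show "y \<in> p ` B" using y unfolding B_def by auto
            qed
          qed
          have "hker (subm X B) (subm Q S) p = B \<inter> A" using hker_restrict[OF BX] k by simp
          then show "hker (subm X B) (subm Q S) p = A" using AB by auto
        qed
        have fgA: "fgmod (subm X A)" by (rule tc_fg[OF tc fd th Asub(2)])
        have fgB: "fgmod (subm X B)" by (rule tc_fg[OF tc fd th Bsub(2)])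
        have fgS: "fgmod (subm Q S)" by (rule tc_fg[OF tc fd th Ssub(2)])
        have eqB: "\<theta> (subm X B) = \<theta> (subm X A) + \<theta> (subm Q S)"
          by (rule th_ses[OF tc fd th fgA fgB fgS ses])
        have thA: "\<theta> X \<le> \<theta> (subm X A)" using A by simp
        show "\<theta> (subm Q S) \<le> 0"
        proof (cases "B = mcar X")
          case True
          then have "\<theta> (subm X B) = \<theta> X" by simp
          then show ?thesis using eqB thA by simp
        next
          case BneX: False
          show ?thesis
          proof (cases "B = A")
            case True
            then show ?thesis using eqB by simp
          next
            case False
            then have "A \<subset> B" using AB by blast
            then have "r A < r B" using r(2) Asub(1) Bsub(1) by blast
            then have "\<not> ?C B" using Amax by (meson not_le)
            then have "\<not> \<theta> X \<le> \<theta> (subm X B)" using Bs BneX by simp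
            then show ?thesis using eqB thA by simp
          qed
        qed
      qed
      have lp: "\<forall>Y\<in>Qbar G \<theta>. \<forall>f. strict_morph G X Y f \<longrightarrow> (\<forall>y\<in>mcar X. f y = mzero Y)"
        using X unfolding lperp_def by simp
      from lp inQ have "\<forall>f. strict_morph G X Q f \<longrightarrow> (\<forall>y\<in>mcar X. f y = mzero Q)"
        by (rule bspec)
      note allz = this[THEN spec[of _ p], THEN mp, OF sm]
      obtain x where x: "x \<in> mcar X" "x \<notin> A" using AX A by auto
      have "p x = mzero Q" using allz x(1) by simp
      then have "x \<in> hker X Q p" using x(1) unfolding hker_def by simp
      then show False using k x(2) by simp
    qed
  qed
qed


lemma part1: "rperp G (Pcl G \<theta>) = Qbar G \<theta>"
proof
  show "rperp G (Pcl G \<theta>) \<subseteq> Qbar G \<theta>" using rperp_Qbar by blast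
  show "Qbar G \<theta> \<subseteq> rperp G (Pcl G \<theta>)"
  proof
    fix Y assume Y: "Y \<in> Qbar G \<theta>"
    have "Y \<in> G" using Y by (simp add: Qbar_def)
    moreover have "\<forall>X\<in>Pcl G \<theta>. \<forall>f. strict_morph G X Y f \<longrightarrow> (\<forall>x\<in>mcar X. f x = mzero Y)"
    proof (intro ballI allI impI)
      fix X f x assume "X \<in> Pcl G \<theta>" "strict_morph G X Y f" "x \<in> mcar X"
      then show "f x = mzero Y" using noPQ[OF tc fd th _ Y] by blast
    qed
    ultimately show "Y \<in> rperp G (Pcl G \<theta>)" unfolding rperp_def by simp
  qed
qed

lemma part2: "lperp G (Qbar G \<theta>) = Pcl G \<theta>"
proof
  show "lperp G (Qbar G \<theta>) \<subseteq> Pcl G \<theta>" using lperp_Pcl by blast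
  show "Pcl G \<theta> \<subseteq> lperp G (Qbar G \<theta>)"
  proof
    fix X assume X: "X \<in> Pcl G \<theta>"
    have "X \<in> G" using X by (simp add: Pcl_def)
    moreover have "\<forall>Y\<in>Qbar G \<theta>. \<forall>f. strict_morph G X Y f \<longrightarrow> (\<forall>x\<in>mcar X. f x = mzero Y)"
    proof (intro ballI allI impI)
      fix Y f x assume "Y \<in> Qbar G \<theta>" "strict_morph G X Y f" "x \<in> mcar X"
      then show "f x = mzero Y" using noPQ[OF tc fd th X] by blast
    qed
    ultimately show "X \<in> lperp G (Qbar G \<theta>)" unfolding lperp_def by simp
  qed
qed

lemma th_zero_sub:
  assumes NG: "N \<in> G" and S: "strict_subobj G N N'" and z: "is_zero (subm N N')"
  shows "\<theta> (subm N N') = 0"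
proof -
  have "subm N N' \<in> G" using S by (simp add: strict_subobj_def subobj_def)
  then have "fgmod (subm N N')" by (rule tc_fg[OF tc fd th])
  then show ?thesis by (rule th_zero[OF tc fd th _ z])
qed

lemma part3:
  assumes W: "Wcl G \<theta> = {X \<in> G. is_zero X}"
  shows "Qbar G \<theta> = Qcl G \<theta>"
proof
  show "Qcl G \<theta> \<subseteq> Qbar G \<theta>"
  proof
    fix N assume N: "N \<in> Qcl G \<theta>"
    have NG: "N \<in> G" using N by (simp add: Qcl_def)
    have "\<forall>N'. strict_subobj G N N' \<longrightarrow> \<theta> (subm N N') \<le> 0"
    proof (intro allI impI)
      fix N' assume S: "strict_subobj G N N'"
      have N'sub: "is_submod N N'" using S by (simp add: strict_subobj_def subobj_def)
      show "\<theta> (subm N N') \<le> 0"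
      proof (cases "is_zero (subm N N')")
        case True
        then show ?thesis using th_zero_sub[OF NG S] by simp
      next
        case nz: False
        show ?thesis
        proof (cases "is_zero N")
          case True
          then have "N' = {mzero N}" using N'sub unfolding is_zero_def is_submod_def by auto
          then have "is_zero (subm N N')" by (simp add: is_zero_def)
          then show ?thesis using nz by simp
        next
          case False
          then have "\<forall>N'. strict_subobj G N N' \<and> \<not> is_zero (subm N N') \<longrightarrow> \<theta> (subm N N') < 0"
            using N by (simp add: Qcl_def)
          then show ?thesis using S nz by (meson less_imp_le)
        qed
      qed
    qed
    then show "N \<in> Qbar G \<theta>" using NG by (simp add: Qbar_def)
  qed
  show "Qbar G \<theta> \<subseteq> Qcl G \<theta>"
  proof
    fix N assume N: "N \<in> Qbar G \<theta>"
    have NG: "N \<in> G" using N by (simp add: Qbar_def)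
    have Qb: "\<forall>N'. strict_subobj G N N' \<longrightarrow> \<theta> (subm N N') \<le> 0" using N by (simp add: Qbar_def)
    have "\<forall>N'. strict_subobj G N N' \<and> \<not> is_zero (subm N N') \<longrightarrow> \<theta> (subm N N') < 0"
    proof (intro allI impI)
      fix N' assume a: "strict_subobj G N N' \<and> \<not> is_zero (subm N N')"
      then have S: "strict_subobj G N N'" and nz: "\<not> is_zero (subm N N')" by simp_all
      have le: "\<theta> (subm N N') \<le> 0" using Qb S by simp
      show "\<theta> (subm N N') < 0"
      proof (rule ccontr)
        assume "\<not> \<theta> (subm N N') < 0"
        then have eq0: "\<theta> (subm N N') = 0" using le by simp
        have sG: "subm N N' \<in> G" using S by (simp add: strict_subobj_def subobj_def)
        have "\<theta> \<in> DG G (subm N N')"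
          unfolding DG_def
        proof (simp only: mem_Collect_eq, intro conjI allI impI)
          show "\<theta> \<in> VLam" by (rule th)
          show "\<theta> (subm N N') = 0" by (rule eq0)
          fix M' assume "strict_subobj G (subm N N') M'"
          then have "strict_subobj G N M'" by (rule strict_comp[OF _ S])
          then have "\<theta> (subm N M') \<le> 0" using Qb by simp
          then show "\<theta> (subm (subm N N') M') \<le> 0" by simp
        qed
        then have "subm N N' \<in> Wcl G \<theta>" using sG by (simp add: Wcl_def)
        then have "is_zero (subm N N')" using W by simp
        then show False using nz by simp
      qed
    qed
    then show "N \<in> Qcl G \<theta>" using NG by (simp add: Qcl_def)
  qed
qed

end


theorem mainTheorem13:
  fixes \<iota> :: "'k::field \<Rightarrow> 'l::ring_1"
    and \<G> :: "('l, 'm) rmod set"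
    and \<theta> :: "('l, 'm) rmod \<Rightarrow> real"
  assumes "fd_algebra \<iota>"
    and "infinite (UNIV :: 'm set)" and "\<exists>h :: 'l \<Rightarrow> 'm. inj h"
    and "torsion_class \<G>"
    and "\<theta> \<in> VLam"
  shows "rperp \<G> (Pcl \<G> \<theta>) = Qbar \<G> \<theta> \<and> lperp \<G> (Qbar \<G> \<theta>) = Pcl \<G> \<theta> \<and>
         (Wcl \<G> \<theta> = {X \<in> \<G>. is_zero X} \<longrightarrow>
            Qbar \<G> \<theta> = Qcl \<G> \<theta> \<and> Qcl \<G> \<theta> = rperp \<G> (Pcl \<G> \<theta>) \<and> Pcl \<G> \<theta> = lperp \<G> (Qcl \<G> \<theta>))"
  proof -
  have tc: "torsion_class \<G>" and fd: "fd_algebra \<iota>" and th: "\<theta> \<in> VLam" using assms by simp_all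
  have p1: "rperp \<G> (Pcl \<G> \<theta>) = Qbar \<G> \<theta>" by (rule part1[OF tc fd th])
  have p2: "lperp \<G> (Qbar \<G> \<theta>) = Pcl \<G> \<theta>" by (rule part2[OF tc fd th])
  have p3: "Wcl \<G> \<theta> = {X \<in> \<G>. is_zero X} \<Longrightarrow> Qbar \<G> \<theta> = Qcl \<G> \<theta>" by (rule part3[OF tc fd th])
  show ?thesis
  proof (intro conjI impI)
    show "rperp \<G> (Pcl \<G> \<theta>) = Qbar \<G> \<theta>" by (rule p1)
    show "lperp \<G> (Qbar \<G> \<theta>) = Pcl \<G> \<theta>" by (rule p2)
    assume W: "Wcl \<G> \<theta> = {X \<in> \<G>. is_zero X}"
    have q: "Qbar \<G> \<theta> = Qcl \<G> \<theta>" by (rule p3[OF W])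
    show "Qbar \<G> \<theta> = Qcl \<G> \<theta>" by (rule q)
    show "Qcl \<G> \<theta> = rperp \<G> (Pcl \<G> \<theta>)" using p1 q by (metis)
    show "Pcl \<G> \<theta> = lperp \<G> (Qcl \<G> \<theta>)" using p2 q by (metis)
  qed
qed

end
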